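(* Let $W(D_4)\subset \mathrm{O}_4(\mathbb R)$ be the group of matrices $D\cdot P(\pi)$ with $D=\mathrm{diag}(\varepsilon_1,\dots,\varepsilon_4)$, $\varepsilon_i=\pm1$, $\prod_i\varepsilon_i=1$, and $P(\pi)$ the permutation matrix of $\pi\in\mathfrak S_4$. Let $$\mu=\tfrac12\begin{pmatrix}1&1&1&-1\\1&1&-1&1\\1&-1&1&1\\1&-1&-1&-1\end{pmatrix},\qquad \rho=\tfrac12\begin{pmatrix}-1&1&1&1\\-1&-1&1&-1\\-1&-1&-1&1\\-1&1&-1&-1\end{pmatrix},$$ and let $\tilde\mu,\tilde\rho$ be the automorphisms of $W(D_4)$ given by $x\mapsto\mu x\mu^{-1}$ and $x\mapsto\rho x\rho^{-1}$. Then every trialitarian automorphism of $W(D_4)$ is conjugate in the group $\mathrm{Aut}(W(D_4))$ to either $\tilde\mu$ or $\tilde\rho$.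
   Context: A trialitarian automorphism of $W(D_4)$ is an automorphism of order $3$ which is not inner. Conjugation by $\mu$ and by $\rho$ normalizes $W(D_4)$, and $\tilde\mu,\tilde\rho$ are trialitarian. *)

theory Defs
  imports "HOL-Analysis.Analysis" "HOL-Algebra.Group" "HOL-Combinatorics.Permutations"
begin

type_synonym mat4 = "real^4^4"

definition perm_mat :: "(4 \<Rightarrow> 4) \<Rightarrow> mat4" where
  "perm_mat p = (\<chi> i j. if i = p j then 1 else 0)"

definition diag_mat :: "(4 \<Rightarrow> real) \<Rightarrow> mat4" where
  "diag_mat e = (\<chi> i j. if i = j then e i else 0)"

definition WD4 :: "mat4 set" where
  "WD4 = {diag_mat e ** perm_mat p | e p.
            (\<forall>i. e i = 1 \<or> e i = -1) \<and> (\<Prod>i\<in>UNIV. e i) = 1 \<and> p permutes (UNIV :: 4 set)}"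

definition WD4_grp :: "mat4 monoid" where
  "WD4_grp = \<lparr>carrier = WD4, mult = (\<lambda>x y. x ** y), one = mat 1\<rparr>"

definition mu :: mat4 where
  "mu = (1/2) *\<^sub>R vector [vector [1,1,1,-1], vector [1,1,-1,1],
                            vector [1,-1,1,1], vector [1,-1,-1,-1]]"

definition rho :: mat4 where
  "rho = (1/2) *\<^sub>R vector [vector [-1,1,1,1], vector [-1,-1,1,-1],
                             vector [-1,-1,-1,1], vector [-1,1,-1,-1]]"

definition conj_by :: "mat4 \<Rightarrow> mat4 \<Rightarrow> mat4" where
  "conj_by g x = g ** x ** matrix_inv g"

definition aut_WD4 :: "(mat4 \<Rightarrow> mat4) set" where
  "aut_WD4 = iso WD4_grp WD4_grp"

definition inner_WD4 :: "(mat4 \<Rightarrow> mat4) \<Rightarrow> bool" where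
  "inner_WD4 f \<longleftrightarrow> (\<exists>g\<in>WD4. \<forall>x\<in>WD4. f x = conj_by g x)"

definition trialitarian :: "(mat4 \<Rightarrow> mat4) \<Rightarrow> bool" where
  "trialitarian f \<longleftrightarrow> f \<in> aut_WD4 \<and> (\<forall>x\<in>WD4. f (f (f x)) = x) \<and> \<not> (\<forall>x\<in>WD4. f x = x)
      \<and> \<not> inner_WD4 f"

definition aut_conjugate :: "(mat4 \<Rightarrow> mat4) \<Rightarrow> (mat4 \<Rightarrow> mat4) \<Rightarrow> bool" where
  "aut_conjugate f g \<longleftrightarrow> (\<exists>psi\<in>aut_WD4. \<forall>x\<in>WD4. f (psi x) = psi (g x))"

end

theory Submission
  imports Defs
begin

datatype ix = I1 | I2 | I3 | I4
datatype se = Pos ix | Neg ix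
datatype el = Mk se se se se

lemma UNIV_ix: "(UNIV::ix set) = {I1,I2,I3,I4}" using ix.exhaust by auto
instance ix :: finite by standard (simp add: UNIV_ix)

fun sel :: "el \<Rightarrow> ix \<Rightarrow> se" where
 "sel (Mk a b c d) I1 = a" | "sel (Mk a b c d) I2 = b" | "sel (Mk a b c d) I3 = c" | "sel (Mk a b c d) I4 = d"
fun idx :: "se \<Rightarrow> ix" where "idx (Pos i) = i" | "idx (Neg i) = i"
fun sg :: "se \<Rightarrow> real" where "sg (Pos i) = 1" | "sg (Neg i) = -1"
fun neg :: "se \<Rightarrow> se" where "neg (Pos i) = Neg i" | "neg (Neg i) = Pos i"
fun cm :: "el \<Rightarrow> se \<Rightarrow> se" where
 "cm x (Pos i) = sel x i" | "cm x (Neg i) = neg (sel x i)"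
fun mul :: "el \<Rightarrow> el \<Rightarrow> el" where
 "mul x (Mk a b c d) = Mk (cm x a) (cm x b) (cm x c) (cm x d)"
definition e0 :: el where "e0 = Mk (Pos I1) (Pos I2) (Pos I3) (Pos I4)"

fun toi :: "ix \<Rightarrow> 4" where "toi I1 = 1" | "toi I2 = 2" | "toi I3 = 3" | "toi I4 = 4"
definition ofi :: "4 \<Rightarrow> ix" where
  "ofi k = (if k = 1 then I1 else if k = 2 then I2 else if k = 3 then I3 else I4)"
lemma ofi_toi[simp]: "ofi (toi i) = i" by (cases i) (simp_all add: ofi_def)
lemma toi_ofi[simp]: "toi (ofi k) = k" using exhaust_4[of k] by (auto simp: ofi_def)
lemma toi_inj[simp]: "toi i = toi j \<longleftrightarrow> i = j" by (metis ofi_toi)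

definition enc :: "el \<Rightarrow> mat4" where
 "enc x = (\<chi> i j. if i = toi (idx (sel x (ofi j))) then sg (sel x (ofi j)) else 0)"

lemma enc_nth: "enc x $ i $ j = (if i = toi (idx (sel x (ofi j))) then sg (sel x (ofi j)) else 0)"
  by (simp add: enc_def)

lemma sel_mul: "sel (mul x y) j = cm x (sel y j)" by (cases y; cases j) auto
lemma idx_neg[simp]: "idx (neg s) = idx s" by (cases s) auto
lemma sg_neg[simp]: "sg (neg s) = - sg s" by (cases s) auto
lemma idx_cm: "idx (cm x s) = idx (sel x (idx s))" by (cases s) auto
lemma sg_cm: "sg (cm x s) = sg s * sg (sel x (idx s))" by (cases s) auto
lemma sg_nz[simp]: "sg s \<noteq> 0" by (cases s) auto

lemma enc_mul: "enc x ** enc y = enc (mul x y)"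
proof -
  have "(enc x ** enc y) $ i $ j = enc (mul x y) $ i $ j" for i j
  proof -
    let ?s = "sel y (ofi j)"
    have "(enc x ** enc y) $ i $ j = (\<Sum>k\<in>UNIV. enc x $ i $ k * enc y $ k $ j)"
      by (simp add: matrix_matrix_mult_def)
    also have "\<dots> = (\<Sum>k\<in>UNIV. if k = toi (idx ?s) then enc x $ i $ k * sg ?s else 0)"
      by (rule sum.cong) (auto simp: enc_nth)
    also have "\<dots> = enc x $ i $ toi (idx ?s) * sg ?s" by simp
    also have "\<dots> = enc (mul x y) $ i $ j" by (simp add: enc_nth sel_mul idx_cm sg_cm)
    finally show ?thesis .
  qed
  then show ?thesis by (simp add: vec_eq_iff)
qed

lemma se_eqI: "idx s = idx t \<Longrightarrow> sg s = sg t \<Longrightarrow> s = t"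
  by (cases s; cases t) auto

lemma enc_toi: "enc x $ toi i $ toi j = (if i = idx (sel x j) then sg (sel x j) else 0)"
  by (simp add: enc_nth)

lemma el_eqI: "(\<And>j. sel x j = sel y j) \<Longrightarrow> x = y"
proof -
  assume h: "\<And>j. sel x j = sel y j"
  obtain a b c d where x: "x = Mk a b c d" by (cases x)
  obtain a' b' c' d' where y: "y = Mk a' b' c' d'" by (cases y)
  show ?thesis using h[of I1] h[of I2] h[of I3] h[of I4] by (simp add: x y)
qed

lemma enc_inj: assumes "enc x = enc y" shows "x = y"
proof (rule el_eqI)
  fix j
  have "enc x $ toi (idx (sel x j)) $ toi j = enc y $ toi (idx (sel x j)) $ toi j" using assms by simp
  then have "sg (sel x j) = (if idx (sel x j) = idx (sel y j) then sg (sel y j) else 0)"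
    by (simp add: enc_toi)
  then show "sel x j = sel y j"
    by (metis se_eqI sg_nz)
qed

lemma enc_e0: "enc e0 = mat 1"
proof -
  have "sel e0 j = Pos j" for j by (cases j) (auto simp: e0_def)
  then show ?thesis by (auto simp: vec_eq_iff enc_nth mat_def)
qed


definition pi :: "el \<Rightarrow> ix \<Rightarrow> ix" where "pi x j = idx (sel x j)"
definition PP :: "el \<Rightarrow> real" where "PP x = (\<Prod>j\<in>UNIV. sg (sel x j))"
definition valid :: "el \<Rightarrow> bool" where "valid x \<longleftrightarrow> bij (pi x) \<and> PP x = 1"

lemma bij_toi: "bij toi" by (rule bij_betw_byWitness[where f'=ofi]) auto
lemma bij_ofi: "bij ofi" by (rule bij_betw_byWitness[where f'=toi]) auto

lemma diag_perm_nth: "(diag_mat e ** perm_mat p) $ i $ j = (if i = p j then e i else 0)"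
proof -
  have "(diag_mat e ** perm_mat p) $ i $ j = (\<Sum>k\<in>UNIV. diag_mat e $ i $ k * perm_mat p $ k $ j)"
    by (simp add: matrix_matrix_mult_def)
  also have "\<dots> = (\<Sum>k\<in>UNIV. if k = i then (if i = p j then e i else 0) else 0)"
    by (rule sum.cong) (auto simp: diag_mat_def perm_mat_def)
  finally have "(diag_mat e ** perm_mat p) $ i $ j = (\<Sum>k\<in>UNIV. if k = i then (if i = p j then e i else 0) else 0)" .
  then show ?thesis by simp
qed

lemma sg_cases: "sg s = 1 \<or> sg s = -1" by (cases s) auto

lemma WD4_sub: assumes "m \<in> WD4" shows "\<exists>x. valid x \<and> m = enc x"
proof -
  from assms obtain e p where m: "m = diag_mat e ** perm_mat p" and e: "\<forall>i. e i = 1 \<or> e i = -1"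
    and pe: "(\<Prod>i\<in>UNIV. e i) = 1" and p: "p permutes (UNIV :: 4 set)"
    unfolding WD4_def by blast
  define mk where "mk j = (if e (p (toi j)) = 1 then Pos else Neg) (ofi (p (toi j)))" for j
  define x where "x = Mk (mk I1) (mk I2) (mk I3) (mk I4)"
  have selx: "sel x j = mk j" for j by (cases j) (auto simp: x_def)
  have idxmk: "idx (mk j) = ofi (p (toi j))" for j by (simp add: mk_def)
  have sgmk: "sg (mk j) = e (p (toi j))" for j using e[rule_format, of "p (toi j)"] by (auto simp: mk_def)
  have "enc x $ i $ j = (diag_mat e ** perm_mat p) $ i $ j" for i j
    unfolding diag_perm_nth enc_nth selx idxmk sgmk toi_ofi by simp
  then have "enc x = m" unfolding m by (simp add: vec_eq_iff)
  moreover have "bij (pi x)"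
  proof -
    have "pi x = ofi \<circ> p \<circ> toi" by (auto simp: pi_def selx idxmk)
    then show ?thesis using bij_ofi bij_toi permutes_bij[OF p] by (simp add: bij_comp)
  qed
  moreover have "PP x = 1"
  proof -
    have "PP x = (\<Prod>j\<in>UNIV. e ((p \<circ> toi) j))" by (simp add: PP_def selx sgmk)
    also have "\<dots> = (\<Prod>i\<in>UNIV. e i)"
      using prod.reindex_bij_betw[of "p \<circ> toi" UNIV UNIV e] bij_toi permutes_bij[OF p]
      by (simp add: bij_comp)
    finally show ?thesis using pe by simp
  qed
  ultimately show ?thesis unfolding valid_def by auto
qed

lemma WD4_sup: assumes "valid x" shows "enc x \<in> WD4"
proof -
  have bp: "bij (pi x)" and P1: "PP x = 1" using assms by (auto simp: valid_def)
  define p where "p = toi \<circ> pi x \<circ> ofi"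
  define e where "e i = sg (sel x (inv_into UNIV (pi x) (ofi i)))" for i
  have pp: "p permutes UNIV"
    by (rule bij_imp_permutes) (auto simp: p_def intro: bij_comp bp bij_toi bij_ofi)
  have ee: "\<forall>i. e i = 1 \<or> e i = -1" by (simp add: e_def sg_cases)
  have pe: "(\<Prod>i\<in>UNIV. e i) = 1"
  proof -
    have bij2: "bij (inv_into UNIV (pi x) \<circ> ofi)" using bp bij_ofi by (simp add: bij_comp bij_imp_bij_inv)
    have "(\<Prod>i\<in>UNIV. e i) = (\<Prod>i\<in>UNIV. (\<lambda>j. sg (sel x j)) ((inv_into UNIV (pi x) \<circ> ofi) i))" by (simp add: e_def)
    also have "\<dots> = PP x" unfolding PP_def using prod.reindex_bij_betw[OF bij2] by simp
    finally show ?thesis using P1 by simp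
  qed
  have "enc x = diag_mat e ** perm_mat p"
  proof -
    have "inv_into UNIV (pi x) (pi x j) = j" for j using bp by (simp add: bij_is_inj)
    then have "enc x $ i $ j = (diag_mat e ** perm_mat p) $ i $ j" for i j
      unfolding diag_perm_nth enc_nth p_def e_def pi_def by auto
    then show ?thesis by (simp add: vec_eq_iff)
  qed
  then show ?thesis unfolding WD4_def using ee pe pp by blast
qed

lemma WD4_enc: "WD4 = enc ` {x. valid x}"
  using WD4_sub WD4_sup by blast


lemma vector_4 [simp]:
 "(vector [x1,x2,x3,x4] ::('a::zero)^4)$1 = x1"
 "(vector [x1,x2,x3,x4] ::('a::zero)^4)$2 = x2"
 "(vector [x1,x2,x3,x4] ::('a::zero)^4)$3 = x3"
 "(vector [x1,x2,x3,x4] ::('a::zero)^4)$4 = x4"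
  unfolding vector_def by simp_all

definition muT :: mat4 where
  "muT = (1/2) *\<^sub>R vector [vector [1,1,1,1], vector [1,1,-1,-1],
                            vector [1,-1,1,-1], vector [-1,1,1,-1]]"

lemma ofi_num[simp]: "ofi 1 = I1" "ofi 2 = I2" "ofi 3 = I3" "ofi 4 = I4"
  by (simp_all add: ofi_def)

lemma mu_muT: "mu ** muT = mat 1"
  by (simp add: vec_eq_iff forall_4 matrix_matrix_mult_def sum_4 mu_def muT_def mat_def)


lemma muT_mu: "muT ** mu = mat 1"
  by (simp add: vec_eq_iff forall_4 matrix_matrix_mult_def sum_4 mu_def muT_def mat_def)

definition rhoT :: mat4 where
  "rhoT = (1/2) *\<^sub>R vector [vector [-1,-1,-1,-1], vector [1,-1,-1,1],
                            vector [1,1,-1,-1], vector [1,-1,1,-1]]"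

lemma rho_rhoT: "rho ** rhoT = mat 1"
  by (simp add: vec_eq_iff forall_4 matrix_matrix_mult_def sum_4 rho_def rhoT_def mat_def)
lemma rhoT_rho: "rhoT ** rho = mat 1"
  by (simp add: vec_eq_iff forall_4 matrix_matrix_mult_def sum_4 rho_def rhoT_def mat_def)

section \<open>Group facts on codes\<close>

lemma mul_assoc: "mul x (mul y z) = mul (mul x y) z"
  by (rule enc_inj) (simp add: enc_mul[symmetric] matrix_mul_assoc)

lemma mul_e0_left[simp]: "mul e0 x = x"
  by (rule enc_inj) (simp add: enc_mul[symmetric] enc_e0)

lemma mul_e0_right[simp]: "mul x e0 = x"
  by (rule enc_inj) (simp add: enc_mul[symmetric] enc_e0)

lemma pi_mul: "pi (mul x y) = pi x \<circ> pi y"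
  by (auto simp: pi_def sel_mul idx_cm)

lemma pi_e0: "pi e0 = id"
proof
  fix j show "pi e0 j = id j" by (cases j) (auto simp: pi_def e0_def)
qed

lemma PP_e0: "PP e0 = 1"
proof -
  have "sel e0 j = Pos j" for j by (cases j) (auto simp: e0_def)
  then show ?thesis by (simp add: PP_def)
qed

lemma PP_mul: assumes "bij (pi y)" shows "PP (mul x y) = PP x * PP y"
proof -
  have "PP (mul x y) = (\<Prod>j\<in>UNIV. sg (sel y j) * (\<lambda>i. sg (sel x i)) (pi y j))"
    by (simp add: PP_def sel_mul sg_cm pi_def)
  also have "\<dots> = PP y * (\<Prod>j\<in>UNIV. (\<lambda>i. sg (sel x i)) (pi y j))"
    by (simp add: prod.distrib PP_def)
  also have "(\<Prod>j\<in>UNIV. (\<lambda>i. sg (sel x i)) (pi y j)) = PP x"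
    unfolding PP_def by (rule prod.reindex_bij_betw[OF assms])
  finally show ?thesis by simp
qed

lemma valid_mul: "valid x \<Longrightarrow> valid y \<Longrightarrow> valid (mul x y)"
  unfolding valid_def by (simp add: pi_mul PP_mul bij_comp)

lemma valid_iff: "valid x \<longleftrightarrow> distinct [pi x I1, pi x I2, pi x I3, pi x I4] \<and>
   sg (sel x I1) * sg (sel x I2) * sg (sel x I3) * sg (sel x I4) = 1"
proof -
  have "bij (pi x) \<longleftrightarrow> inj (pi x)"
    using finite_UNIV_inj_surj[of "pi x"] by (auto simp: bij_def)
  also have "\<dots> \<longleftrightarrow> distinct (map (pi x) [I1, I2, I3, I4])"
  proof -
    have s: "set [I1, I2, I3, I4] = UNIV" by (simp add: UNIV_ix)
    have "distinct [I1, I2, I3, I4]" by simp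
    then show ?thesis using distinct_map[of "pi x" "[I1, I2, I3, I4]"] unfolding s by blast
  qed
  finally show ?thesis unfolding valid_def PP_def by (simp add: UNIV_ix mult.assoc)
qed

definition validc :: "el \<Rightarrow> bool" where
  "validc x \<longleftrightarrow> distinct [pi x I1, pi x I2, pi x I3, pi x I4] \<and>
   sg (sel x I1) * sg (sel x I2) * sg (sel x I3) * sg (sel x I4) = 1"

lemma valid_validc: "valid x = validc x" by (simp add: valid_iff validc_def)

lemma valid_e0: "valid e0" unfolding valid_def by (simp add: pi_e0 PP_e0)

section \<open>Transfer of automorphisms\<close>

lemma inj_enc: "inj enc" by (rule injI) (rule enc_inj)

lemma aut_props: assumes "f \<in> aut_WD4"
  shows "\<And>x. x \<in> WD4 \<Longrightarrow> f x \<in> WD4"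
    "\<And>x y. x \<in> WD4 \<Longrightarrow> y \<in> WD4 \<Longrightarrow> f (x ** y) = f x ** f y"
    "bij_betw f WD4 WD4"
  using assms unfolding aut_WD4_def iso_def hom_def WD4_grp_def by auto

definition Fc :: "(mat4 \<Rightarrow> mat4) \<Rightarrow> el \<Rightarrow> el" where
  "Fc f c = inv_into UNIV enc (f (enc c))"

lemma Fc_valid: assumes "f \<in> aut_WD4" "valid c"
  shows "valid (Fc f c)" "enc (Fc f c) = f (enc c)"
proof -
  have "f (enc c) \<in> WD4" using aut_props(1)[OF assms(1)] WD4_sup[OF assms(2)] by blast
  then obtain d where d: "valid d" "f (enc c) = enc d" using WD4_sub by blast
  have "Fc f c = d" unfolding Fc_def d(2) using inj_enc by simp
  then show "valid (Fc f c)" "enc (Fc f c) = f (enc c)" using d by auto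
qed

lemma Fc_mul: assumes "f \<in> aut_WD4" "valid c" "valid d"
  shows "Fc f (mul c d) = mul (Fc f c) (Fc f d)"
proof (rule enc_inj)
  have "enc (Fc f (mul c d)) = f (enc c ** enc d)"
    using Fc_valid(2)[OF assms(1) valid_mul[OF assms(2,3)]] by (simp add: enc_mul)
  also have "\<dots> = f (enc c) ** f (enc d)"
    using aut_props(2)[OF assms(1)] WD4_sup assms by blast
  also have "\<dots> = enc (mul (Fc f c) (Fc f d))"
    using Fc_valid(2)[OF assms(1)] assms by (simp add: enc_mul[symmetric])
  finally show "enc (Fc f (mul c d)) = enc (mul (Fc f c) (Fc f d))" .
qed

lemma Fc_inj: assumes "f \<in> aut_WD4" "valid c" "valid d" "Fc f c = Fc f d" shows "c = d"
proof -
  have "f (enc c) = f (enc d)" using Fc_valid(2)[OF assms(1)] assms by metis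
  then have "enc c = enc d"
    using aut_props(3)[OF assms(1)] WD4_sup assms(2,3) unfolding bij_betw_def inj_on_def by blast
  then show ?thesis by (rule enc_inj)
qed

fun ev :: "bool list \<Rightarrow> el \<Rightarrow> el \<Rightarrow> el" where
  "ev [] x y = e0" | "ev (t # w) x y = mul (if t then y else x) (ev w x y)"

lemma ev_valid: "valid x \<Longrightarrow> valid y \<Longrightarrow> valid (ev w x y)"
  by (induction w) (auto simp: valid_e0 valid_mul)

definition cj :: "el \<Rightarrow> el \<Rightarrow> el \<Rightarrow> el" where "cj h hi z = mul (mul h z) hi"

lemma cj_mul: assumes "mul hi h = e0" shows "cj h hi (mul u v) = mul (cj h hi u) (cj h hi v)"
proof -
  have r: "mul hi (mul h X) = X" for X using assms by (simp add: mul_assoc)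
  show ?thesis unfolding cj_def by (simp add: mul_assoc[symmetric] r)
qed

lemma cj_e0: "mul h hi = e0 \<Longrightarrow> cj h hi e0 = e0" by (simp add: cj_def)

lemma cj_ev: "mul h hi = e0 \<Longrightarrow> mul hi h = e0 \<Longrightarrow> cj h hi (ev w x y) = ev w (cj h hi x) (cj h hi y)"
  by (induction w) (auto simp: cj_e0 cj_mul)

lemma bij_pi_inv: assumes "mul h hi = e0" "mul hi h = e0" shows "bij (pi hi)"
proof -
  have "pi h \<circ> pi hi = id" "pi hi \<circ> pi h = id" using assms by (metis pi_mul pi_e0)+
  then show ?thesis by (rule o_bij)
qed

lemma cj_valid: assumes "valid c" "mul h hi = e0" "mul hi h = e0" "bij (pi h)"
  shows "valid (cj h hi c)"
proof -
  have bhi: "bij (pi hi)" using bij_pi_inv assms(2,3) .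
  have bc: "bij (pi c)" using assms(1) by (simp add: valid_def)
  have "bij (pi (cj h hi c))" unfolding cj_def pi_mul using bhi bc assms(4) by (simp add: bij_comp)
  moreover have "PP (cj h hi c) = PP c"
  proof -
    have "PP (cj h hi c) = PP h * PP c * PP hi" unfolding cj_def by (simp add: PP_mul bhi bc)
    also have "\<dots> = PP c * PP (mul h hi)" by (simp add: PP_mul bhi)
    finally show ?thesis using assms(2) by (simp add: PP_e0)
  qed
  ultimately show ?thesis using assms(1) by (simp add: valid_def)
qed

lemma matrix_inv_eq: fixes A B :: mat4
  assumes "A ** B = mat 1" "B ** A = mat 1" shows "matrix_inv A = B"
proof -
  let ?A' = "matrix_inv A"
  have h: "A ** ?A' = mat 1 \<and> ?A' ** A = mat 1" unfolding matrix_inv_def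
    by (rule someI[of _ B]) (use assms in auto)
  have "?A' = ?A' ** (A ** B)" using assms by simp
  also have "\<dots> = (?A' ** A) ** B" by (simp add: matrix_mul_assoc)
  also have "\<dots> = B" using h by simp
  finally show ?thesis .
qed

lemma conj_by_mult: assumes "matrix_inv g ** g = mat 1"
  shows "conj_by g (X ** Y) = conj_by g X ** conj_by g Y"
proof -
  have "conj_by g X ** conj_by g Y = g ** X ** (matrix_inv g ** g) ** Y ** matrix_inv g"
    unfolding conj_by_def by (simp add: matrix_mul_assoc)
  then show ?thesis using assms unfolding conj_by_def by (simp add: matrix_mul_assoc)
qed

lemma conj_enc: assumes "mul h hi = e0" "mul hi h = e0"
  shows "conj_by (enc h) (enc c) = enc (cj h hi c)" "matrix_inv (enc h) = enc hi"
proof -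
  show mi: "matrix_inv (enc h) = enc hi"
    by (rule matrix_inv_eq) (simp_all add: enc_mul assms enc_e0)
  show "conj_by (enc h) (enc c) = enc (cj h hi c)"
    unfolding conj_by_def mi cj_def by (simp add: enc_mul)
qed

lemma conj_aut: assumes "mul h hi = e0" "mul hi h = e0" "bij (pi h)"
  shows "conj_by (enc h) \<in> aut_WD4"
proof -
  note ce = conj_enc[OF assms(1,2)]
  have bhi: "bij (pi hi)" using bij_pi_inv assms(1,2) .
  have into: "conj_by (enc h) X \<in> WD4" if XW: "X \<in> WD4" for X
  proof -
    obtain c where "valid c" "X = enc c" using WD4_sub XW by blast
    then show ?thesis using ce cj_valid assms WD4_sup by auto
  qed
  have homm: "conj_by (enc h) (X ** Y) = conj_by (enc h) X ** conj_by (enc h) Y" for X Y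
    by (rule conj_by_mult) (simp add: ce enc_mul assms enc_e0)
  have inj: "inj_on (conj_by (enc h)) WD4"
  proof (rule inj_onI)
    fix X Y assume "X \<in> WD4" "Y \<in> WD4" "conj_by (enc h) X = conj_by (enc h) Y"
    then have "enc hi ** (enc h ** X ** enc hi) ** enc h = enc hi ** (enc h ** Y ** enc hi) ** enc h"
      unfolding conj_by_def ce by simp
    then have e: "X ** enc hi ** enc h = Y ** enc hi ** enc h" by (simp add: matrix_mul_assoc enc_mul assms enc_e0)
    have k: "A ** enc hi ** enc h = A" for A
      by (metis matrix_mul_assoc matrix_mul_rid enc_mul assms(2) enc_e0)
    show "X = Y" using e by (simp only: k)
  qed
  have surj: "WD4 \<subseteq> conj_by (enc h) ` WD4"
  proof
    fix Y assume "Y \<in> WD4"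
    then obtain c where c: "valid c" "Y = enc c" using WD4_sub by blast
    have v: "valid (cj hi h c)" using cj_valid[OF c(1) assms(2,1) bhi] .
    have "conj_by (enc h) (enc (cj hi h c)) = enc c"
      unfolding ce cj_def by (simp add: mul_assoc assms) (simp add: mul_assoc[symmetric] assms)
    then show "Y \<in> conj_by (enc h) ` WD4" using v WD4_sup c by (metis image_eqI)
  qed
  have "bij_betw (conj_by (enc h)) WD4 WD4"
    using inj into surj unfolding bij_betw_def by blast
  then show ?thesis using into homm
    unfolding aut_WD4_def iso_def hom_def WD4_grp_def by auto
qed


definition lall :: "('a \<Rightarrow> bool) \<Rightarrow> 'a list \<Rightarrow> bool" where "lall P xs = list_all P xs"
lemma lall_cong[cong]: "xs = ys \<Longrightarrow> lall P xs = lall P ys" by simp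
lemma lall_simps[simp]: "lall P [] = True" "lall P (x # xs) = (P x \<and> lall P xs)"
  by (simp_all add: lall_def)
lemma lall_iff: "lall P xs \<longleftrightarrow> (\<forall>x\<in>set xs. P x)" by (simp add: lall_def list_all_iff)
lemma lall_append: "lall P (xs @ ys) \<longleftrightarrow> lall P xs \<and> lall P ys" by (simp add: lall_def)

definition sgn :: "bool \<Rightarrow> ix \<Rightarrow> se" where "sgn b i = (if b then Neg i else Pos i)"
fun isneg :: "se \<Rightarrow> bool" where "isneg (Pos i) = False" | "isneg (Neg i) = True"
fun mkel :: "ix list \<Rightarrow> bool list \<Rightarrow> el" where
  "mkel [i1,i2,i3,i4] [b1,b2,b3,b4] = Mk (sgn b1 i1) (sgn b2 i2) (sgn b3 i3) (sgn b4 i4)"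
  | "mkel _ _ = e0"

fun o2 :: "el \<Rightarrow> bool" where "o2 (Mk a b c d) = (mul (Mk a b c d) (Mk a b c d) = e0 \<and> Mk a b c d \<noteq> e0)"
fun X0c :: "el \<Rightarrow> bool" where "X0c (Mk a b c d) = o2 (mul (Mk a b c d) (Mk a b c d))"
fun Y0c :: "el \<Rightarrow> bool" where
  "Y0c (Mk a b c d) = (mul (Mk a b c d) (mul (Mk a b c d) (Mk a b c d)) = e0 \<and> Mk a b c d \<noteq> e0)"

lemma o2_iff: "o2 z \<longleftrightarrow> mul z z = e0 \<and> z \<noteq> e0" by (cases z) simp
lemma X0c_iff: "X0c z \<longleftrightarrow> mul (mul z z) (mul z z) = e0 \<and> mul z z \<noteq> e0"
  by (cases z) (simp only: X0c.simps o2_iff)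
lemma Y0c_iff: "Y0c z \<longleftrightarrow> mul z (mul z z) = e0 \<and> z \<noteq> e0" by (cases z) simp

definition P24 :: "ix list list" where "P24 = [[I1,I2,I3,I4], [I1,I2,I4,I3], [I1,I3,I2,I4], [I1,I3,I4,I2], [I1,I4,I2,I3], [I1,I4,I3,I2], [I2,I1,I3,I4], [I2,I1,I4,I3], [I2,I3,I1,I4], [I2,I3,I4,I1], [I2,I4,I1,I3], [I2,I4,I3,I1], [I3,I1,I2,I4], [I3,I1,I4,I2], [I3,I2,I1,I4], [I3,I2,I4,I1], [I3,I4,I1,I2], [I3,I4,I2,I1], [I4,I1,I2,I3], [I4,I1,I3,I2], [I4,I2,I1,I3], [I4,I2,I3,I1], [I4,I3,I1,I2], [I4,I3,I2,I1]]"

definition S8 :: "bool list list" where "S8 = [[False,False,False,False], [False,False,True,True], [False,True,False,True], [False,True,True,False], [True,False,False,True], [True,False,True,False], [True,True,False,False], [True,True,True,True]]"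

definition TAB :: "(el \<times> bool list) list" where "TAB = [((Mk (Pos I1) (Pos I2) (Pos I3) (Pos I4)),[]), ((Mk (Pos I1) (Pos I2) (Neg I3) (Neg I4)),[False,False]), ((Mk (Pos I1) (Neg I2) (Pos I3) (Neg I4)),[True,True,False,False,True]), ((Mk (Pos I1) (Neg I2) (Neg I3) (Pos I4)),[True,True,False,False,True,False,False]), ((Mk (Neg I1) (Pos I2) (Pos I3) (Neg I4)),[True,False,False,True,True]), ((Mk (Neg I1) (Pos I2) (Neg I3) (Pos I4)),[True,False,False,True,True,False,False]), ((Mk (Neg I1) (Neg I2) (Pos I3) (Pos I4)),[True,False,False,True,False,False,True]), ((Mk (Neg I1) (Neg I2) (Neg I3) (Neg I4)),[True,False,False,True,False,False,True,False,False]), ((Mk (Pos I1) (Pos I2) (Pos I4) (Pos I3)),[True,True,False,False,True,False]), ((Mk (Pos I1) (Pos I2) (Neg I4) (Neg I3)),[False,True,True,False,False,True]), ((Mk (Pos I1) (Neg I2) (Pos I4) (Neg I3)),[False,False,False]), ((Mk (Pos I1) (Neg I2) (Neg I4) (Pos I3)),[False]), ((Mk (Neg I1) (Pos I2) (Pos I4) (Neg I3)),[True,False,True,False,False,False,True,False,True]), ((Mk (Neg I1) (Pos I2) (Neg I4) (Pos I3)),[True,False,False,True,False,False,True,False]), ((Mk (Neg I1) (Neg I2) (Pos I4) (Pos I3)),[True,False,False,True,True,False]), ((Mk (Neg I1) (Neg I2) (Neg I4) (Neg I3)),[False,True,False,False,True,True]), ((Mk (Pos I1) (Pos I3) (Pos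 I2) (Pos I4)),[True,False,True,False,False,False,True,True,False]), ((Mk (Pos I1) (Pos I3) (Neg I2) (Neg I4)),[True,False,True,True,False,True,False,True]), ((Mk (Pos I1) (Neg I3) (Pos I2) (Neg I4)),[False,True,False,False,True,False,True,False]), ((Mk (Pos I1) (Neg I3) (Neg I2) (Pos I4)),[True,True,False,True,False,True,True,False,True]), ((Mk (Neg I1) (Pos I3) (Pos I2) (Neg I4)),[False,True,True,False,True,False]), ((Mk (Neg I1) (Pos I3) (Neg I2) (Pos I4)),[True,False,True,False,True,True,False]), ((Mk (Neg I1) (Neg I3) (Pos I2) (Pos I4)),[False,False,False,True,True,False,True,False]), ((Mk (Neg I1) (Neg I3) (Neg I2) (Neg I4)),[False,True,True,False,False,False,True,False]), ((Mk (Pos I1) (Pos I3) (Pos I4) (Pos I2)),[False,True,False,False,True,False,True,False,False]), ((Mk (Pos I1) (Pos I3) (Neg I4) (Neg I2)),[False,True,False,False,True,False,True]), ((Mk (Pos I1) (Neg I3) (Pos I4) (Neg I2)),[True,False,True,False,False,False,True,True]), ((Mk (Pos I1) (Neg I3) (Neg I4) (Pos I2)),[True,False,False,False,True,False,True,True]), ((Mk (Neg I1) (Pos I3) (Pos I4) (Neg I2)),[False,False,False,True,True,False,True]), ((Mk (Neg I1) (Pos I3) (Neg I4) (Pos I2)),[False,True,True,False,False,False,True]), ((Mk (Neg I1) (Neg I3) (Pos I4) (Pos I2)),[True,False,True,False,True,True]), ((Mk (Neg I1) (Neg I3) (Neg I4) (Neg I2)),[False,True,True,False,True]), ((Mk (Pos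 I1) (Pos I4) (Pos I2) (Pos I3)),[True,False,False,True,False,False,False,True,False]), ((Mk (Pos I1) (Pos I4) (Neg I2) (Neg I3)),[False,False,True,False,False,True,False,True,False]), ((Mk (Pos I1) (Neg I4) (Pos I2) (Neg I3)),[True,False,False,True,False,True,False,False,False]), ((Mk (Pos I1) (Neg I4) (Neg I2) (Pos I3)),[True,False,False,True,False,True,False]), ((Mk (Neg I1) (Pos I4) (Pos I2) (Neg I3)),[True,True,False,True,False,False,False]), ((Mk (Neg I1) (Pos I4) (Neg I2) (Pos I3)),[True,True,False,True,False]), ((Mk (Neg I1) (Neg I4) (Pos I2) (Pos I3)),[True,True,False,False,False,True,False]), ((Mk (Neg I1) (Neg I4) (Neg I2) (Neg I3)),[False,False,True,True,False,True,False]), ((Mk (Pos I1) (Pos I4) (Pos I3) (Pos I2)),[True,False,False,True,False,True]), ((Mk (Pos I1) (Pos I4) (Neg I3) (Neg I2)),[True,False,False,True,False,True,False,False]), ((Mk (Pos I1) (Neg I4) (Pos I3) (Neg I2)),[True,False,False,True,False,False,False,True]), ((Mk (Pos I1) (Neg I4) (Neg I3) (Pos I2)),[False,False,True,False,False,True,False,True]), ((Mk (Neg I1) (Pos I4) (Pos I3) (Neg I2)),[True,True,False,False,False,True]), ((Mk (Neg I1) (Pos I4) (Neg I3) (Pos I2)),[False,False,True,True,False,True]), ((Mk (Neg I1) (Neg I4) (Pos I3) (Pos I2)),[True,True,False,True]), ((Mk (Neg I1) (Neg I4) (Neg I3) (Neg I2)),[True,True,False,True,False,False]), ((Mk (Pos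 I2) (Pos I1) (Pos I3) (Pos I4)),[False,True,False,False,False,True,True,False,True]), ((Mk (Pos I2) (Pos I1) (Neg I3) (Neg I4)),[False,True,False,True,True,False,False,False,True]), ((Mk (Pos I2) (Neg I1) (Pos I3) (Neg I4)),[False,True,True,False,True,False,True,True]), ((Mk (Pos I2) (Neg I1) (Neg I3) (Pos I4)),[False,True,False,True,True,False,True]), ((Mk (Neg I2) (Pos I1) (Pos I3) (Neg I4)),[True,False,True,True,False,True,False]), ((Mk (Neg I2) (Pos I1) (Neg I3) (Pos I4)),[True,True,False,True,False,True,True,False]), ((Mk (Neg I2) (Neg I1) (Pos I3) (Pos I4)),[True,False,False,False,True,True,False,True,False]), ((Mk (Neg I2) (Neg I1) (Neg I3) (Neg I4)),[True,False,True,True,False,False,False,True,False]), ((Mk (Pos I2) (Pos I1) (Pos I4) (Pos I3)),[False,True,True,False,True,False,True,True,False]), ((Mk (Pos I2) (Pos I1) (Neg I4) (Neg I3)),[False,True,False,True,True,False,True,False]), ((Mk (Pos I2) (Neg I1) (Pos I4) (Neg I3)),[True,True,False,True,False,False,False,True,True]), ((Mk (Pos I2) (Neg I1) (Neg I4) (Pos I3)),[True,True,False,False,False,True,False,True,True]), ((Mk (Neg I2) (Pos I1) (Pos I4) (Neg I3)),[True,False,False,False,True,True,False,True]), ((Mk (Neg I2) (Pos I1) (Neg I4) (Pos I3)),[True,False,True,True,False,False,False,True]), ((Mk (Neg I2) (Neg I1) (Pos I4) (Pos I3)),[True,True,False,True,False,True,True]), ((Mk (Neg I2) (Neg I1) (Neg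 I4) (Neg I3)),[True,False,True,True,False,True]), ((Mk (Pos I2) (Pos I3) (Pos I1) (Pos I4)),[True]), ((Mk (Pos I2) (Pos I3) (Neg I1) (Neg I4)),[True,False,False]), ((Mk (Pos I2) (Neg I3) (Pos I1) (Neg I4)),[False,False,True]), ((Mk (Pos I2) (Neg I3) (Neg I1) (Pos I4)),[False,False,True,False,False]), ((Mk (Neg I2) (Pos I3) (Pos I1) (Neg I4)),[True,True,False,False,True,True]), ((Mk (Neg I2) (Pos I3) (Neg I1) (Pos I4)),[True,True,False,False,True,True,False,False]), ((Mk (Neg I2) (Neg I3) (Pos I1) (Pos I4)),[True,True,False,False,True,False,False,True]), ((Mk (Neg I2) (Neg I3) (Neg I1) (Neg I4)),[True,True,False,False,True,False,False,True,False,False]), ((Mk (Pos I2) (Pos I3) (Pos I4) (Pos I1)),[False,False,True,False]), ((Mk (Pos I2) (Pos I3) (Neg I4) (Neg I1)),[False,False,True,False,False,False]), ((Mk (Pos I2) (Neg I3) (Pos I4) (Neg I1)),[True,False,False,False]), ((Mk (Pos I2) (Neg I3) (Neg I4) (Pos I1)),[True,False]), ((Mk (Neg I2) (Pos I3) (Pos I4) (Neg I1)),[False,False,True,False,True,False,False,True,True]), ((Mk (Neg I2) (Pos I3) (Neg I4) (Pos I1)),[True,True,False,False,True,False,False,True,False]), ((Mk (Neg I2) (Neg I3) (Pos I4) (Pos I1)),[True,True,False,False,True,True,False]), ((Mk (Neg I2) (Neg I3) (Neg I4) (Neg I1)),[True,False,True,False,False,True,True]), ((Mk (Pos I2) (Pos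 I4) (Pos I1) (Pos I3)),[True,True,False,False,True,False,True]), ((Mk (Pos I2) (Pos I4) (Neg I1) (Neg I3)),[True,True,False,False,True,False,True,False,False]), ((Mk (Pos I2) (Neg I4) (Pos I1) (Neg I3)),[False,True,True,False,False,True,True]), ((Mk (Pos I2) (Neg I4) (Neg I1) (Pos I3)),[False,True,True,False,False,True,True,False,False]), ((Mk (Neg I2) (Pos I4) (Pos I1) (Neg I3)),[False,False,False,True]), ((Mk (Neg I2) (Pos I4) (Neg I1) (Pos I3)),[False,False,False,True,False,False]), ((Mk (Neg I2) (Neg I4) (Pos I1) (Pos I3)),[False,True]), ((Mk (Neg I2) (Neg I4) (Neg I1) (Neg I3)),[False,True,False,False]), ((Mk (Pos I2) (Pos I4) (Pos I3) (Pos I1)),[False,True,True,False,False,True,True,False]), ((Mk (Pos I2) (Pos I4) (Neg I3) (Neg I1)),[False,True,False,True,False,False,True,True]), ((Mk (Pos I2) (Neg I4) (Pos I3) (Neg I1)),[True,True,False,False,True,False,True,False,False,False]), ((Mk (Pos I2) (Neg I4) (Neg I3) (Pos I1)),[True,True,False,False,True,False,True,False]), ((Mk (Neg I2) (Pos I4) (Pos I3) (Neg I1)),[False,True,False,False,False]), ((Mk (Neg I2) (Pos I4) (Neg I3) (Pos I1)),[False,True,False]), ((Mk (Neg I2) (Neg I4) (Pos I3) (Pos I1)),[False,False,False,True,False]), ((Mk (Neg I2) (Neg I4) (Neg I3) (Neg I1)),[False,False,False,True,False,False,False]), ((Mk (Pos I3) (Pos I1) (Pos I2) (Pos I4)),[True,True]),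 ((Mk (Pos I3) (Pos I1) (Neg I2) (Neg I4)),[True,True,False,False]), ((Mk (Pos I3) (Neg I1) (Pos I2) (Neg I4)),[True,False,False,True]), ((Mk (Pos I3) (Neg I1) (Neg I2) (Pos I4)),[True,False,False,True,False,False]), ((Mk (Neg I3) (Pos I1) (Pos I2) (Neg I4)),[False,False,True,True]), ((Mk (Neg I3) (Pos I1) (Neg I2) (Pos I4)),[False,False,True,True,False,False]), ((Mk (Neg I3) (Neg I1) (Pos I2) (Pos I4)),[False,False,True,False,False,True]), ((Mk (Neg I3) (Neg I1) (Neg I2) (Neg I4)),[False,False,True,False,False,True,False,False]), ((Mk (Pos I3) (Pos I1) (Pos I4) (Pos I2)),[True,False,False,True,False]), ((Mk (Pos I3) (Pos I1) (Neg I4) (Neg I2)),[True,False,False,True,False,False,False]), ((Mk (Pos I3) (Neg I1) (Pos I4) (Neg I2)),[True,True,False,False,False]), ((Mk (Pos I3) (Neg I1) (Neg I4) (Pos I2)),[True,True,False]), ((Mk (Neg I3) (Pos I1) (Pos I4) (Neg I2)),[False,True,False,False,False,True,False,True]), ((Mk (Neg I3) (Pos I1) (Neg I4) (Pos I2)),[False,False,True,False,False,True,False]), ((Mk (Neg I3) (Neg I1) (Pos I4) (Pos I2)),[False,False,True,True,False]), ((Mk (Neg I3) (Neg I1) (Neg I4) (Neg I2)),[False,False,True,True,False,False,False]), ((Mk (Pos I3) (Pos I2) (Pos I1) (Pos I4)),[False,True,False,False,False,True,True,False]), ((Mk (Pos I3) (Pos I2) (Neg I1) (Neg I4)),[False,True,True,False,True,False,True]),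 ((Mk (Pos I3) (Neg I2) (Pos I1) (Neg I4)),[True,False,True,True,False,True,False,True,True]), ((Mk (Pos I3) (Neg I2) (Neg I1) (Pos I4)),[True,False,True,False,True,True,False,True]), ((Mk (Neg I3) (Pos I2) (Pos I1) (Neg I4)),[False,True,False,True,True,False,False,False]), ((Mk (Neg I3) (Pos I2) (Neg I1) (Pos I4)),[False,True,False,True,True,False]), ((Mk (Neg I3) (Neg I2) (Pos I1) (Pos I4)),[False,True,False,True,False,False,True,False]), ((Mk (Neg I3) (Neg I2) (Neg I1) (Neg I4)),[False,True,True,False,False,False,True,False,True]), ((Mk (Pos I3) (Pos I2) (Pos I4) (Pos I1)),[False,True,False,False,False,True,False,False,True]), ((Mk (Pos I3) (Pos I2) (Neg I4) (Neg I1)),[True,False,True,False,True,True,False,True,False]), ((Mk (Pos I3) (Neg I2) (Pos I4) (Neg I1)),[False,True,False,False,False,True,True]), ((Mk (Pos I3) (Neg I2) (Neg I4) (Pos I1)),[False,False,False,True,False,True,True]), ((Mk (Neg I3) (Pos I2) (Pos I4) (Neg I1)),[False,True,False,True,False,False,True]), ((Mk (Neg I3) (Pos I2) (Neg I4) (Pos I1)),[False,True,False,True,False,False,True,False,False]), ((Mk (Neg I3) (Neg I2) (Pos I4) (Pos I1)),[False,True,False,True,True]), ((Mk (Neg I3) (Neg I2) (Neg I4) (Neg I1)),[False,True,False,True,True,False,False]), ((Mk (Pos I3) (Pos I4) (Pos I1) (Pos I2)),[False,False,True,False,False,False,True,False]), ((Mk (Pos I3) (Pos I4) (Neg I1) (Neg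 I2)),[False,False,False,True,True,False,True,True]), ((Mk (Pos I3) (Neg I4) (Pos I1) (Neg I2)),[False,False,True,False,True,False,False,False]), ((Mk (Pos I3) (Neg I4) (Neg I1) (Pos I2)),[False,False,True,False,True,False]), ((Mk (Neg I3) (Pos I4) (Pos I1) (Neg I2)),[True,False,True,False,False,False]), ((Mk (Neg I3) (Pos I4) (Neg I1) (Pos I2)),[True,False,True,False]), ((Mk (Neg I3) (Neg I4) (Pos I1) (Pos I2)),[True,False,False,False,True,False]), ((Mk (Neg I3) (Neg I4) (Neg I1) (Neg I2)),[False,True,True,False,True,True]), ((Mk (Pos I3) (Pos I4) (Pos I2) (Pos I1)),[False,False,True,False,True]), ((Mk (Pos I3) (Pos I4) (Neg I2) (Neg I1)),[False,False,True,False,True,False,False]), ((Mk (Pos I3) (Neg I4) (Pos I2) (Neg I1)),[False,False,True,False,False,False,True]), ((Mk (Pos I3) (Neg I4) (Neg I2) (Pos I1)),[False,False,True,False,False,False,True,False,False]), ((Mk (Neg I3) (Pos I4) (Pos I2) (Neg I1)),[True,False,False,False,True]), ((Mk (Neg I3) (Pos I4) (Neg I2) (Pos I1)),[True,False,False,False,True,False,False]), ((Mk (Neg I3) (Neg I4) (Pos I2) (Pos I1)),[True,False,True]), ((Mk (Neg I3) (Neg I4) (Neg I2) (Neg I1)),[True,False,True,False,False]), ((Mk (Pos I4) (Pos I1) (Pos I2) (Pos I3)),[False,False,False,True,True,False,False]), ((Mk (Pos I4) (Pos I1) (Neg I2) (Neg I3)),[False,False,False,True,True]), ((Mk (Pos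 I4) (Neg I1) (Pos I2) (Neg I3)),[True,False,True,False,False,False,True,False]), ((Mk (Pos I4) (Neg I1) (Neg I2) (Pos I3)),[False,False,False,True,False,False,True]), ((Mk (Neg I4) (Pos I1) (Pos I2) (Neg I3)),[False,True,True,False,False]), ((Mk (Neg I4) (Pos I1) (Neg I2) (Pos I3)),[False,True,True]), ((Mk (Neg I4) (Neg I1) (Pos I2) (Pos I3)),[False,True,False,False,True,False,False]), ((Mk (Neg I4) (Neg I1) (Neg I2) (Neg I3)),[False,True,False,False,True]), ((Mk (Pos I4) (Pos I1) (Pos I3) (Pos I2)),[True,False,True,False,False,False,True,False,False]), ((Mk (Pos I4) (Pos I1) (Neg I3) (Neg I2)),[True,False,True,False,False,False,True]), ((Mk (Pos I4) (Neg I1) (Pos I3) (Neg I2)),[False,False,False,True,True,False]), ((Mk (Pos I4) (Neg I1) (Neg I3) (Pos I2)),[True,False,True,False,True]), ((Mk (Neg I4) (Pos I1) (Pos I3) (Neg I2)),[False,True,False,False,True,False]), ((Mk (Neg I4) (Pos I1) (Neg I3) (Pos I2)),[True,False,False,False,True,False,True]), ((Mk (Neg I4) (Neg I1) (Pos I3) (Pos I2)),[False,True,True,False,False,False]), ((Mk (Neg I4) (Neg I1) (Neg I3) (Neg I2)),[False,True,True,False]), ((Mk (Pos I4) (Pos I2) (Pos I1) (Pos I3)),[False,False,True,False,True,False,False,True,False]), ((Mk (Pos I4) (Pos I2) (Neg I1) (Neg I3)),[True,True,False,True,False,False,False,True]), ((Mk (Pos I4) (Neg I2) (Pos I1) (Neg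 I3)),[True,False,False,False,True,True,False]), ((Mk (Pos I4) (Neg I2) (Neg I1) (Pos I3)),[True,True,False,True,False,True]), ((Mk (Neg I4) (Pos I2) (Pos I1) (Neg I3)),[True,False,True,False,False,True,False]), ((Mk (Neg I4) (Pos I2) (Neg I1) (Pos I3)),[True,True,False,False,False,True,False,True]), ((Mk (Neg I4) (Neg I2) (Pos I1) (Pos I3)),[True,False,True,True,False,False,False]), ((Mk (Neg I4) (Neg I2) (Neg I1) (Neg I3)),[True,False,True,True,False]), ((Mk (Pos I4) (Pos I2) (Pos I3) (Pos I1)),[False,False,True,False,True,True]), ((Mk (Pos I4) (Pos I2) (Neg I3) (Neg I1)),[True,False,False,False,True,True]), ((Mk (Pos I4) (Neg I2) (Pos I3) (Neg I1)),[False,False,True,False,True,False,False,True]), ((Mk (Pos I4) (Neg I2) (Neg I3) (Pos I1)),[True,False,False,False,True,False,False,True]), ((Mk (Neg I4) (Pos I2) (Pos I3) (Neg I1)),[True,False,True,True,False,False]), ((Mk (Neg I4) (Pos I2) (Neg I3) (Pos I1)),[True,False,True,True]), ((Mk (Neg I4) (Neg I2) (Pos I3) (Pos I1)),[True,False,True,False,False,True,False,False]), ((Mk (Neg I4) (Neg I2) (Neg I3) (Neg I1)),[True,False,True,False,False,True]), ((Mk (Pos I4) (Pos I3) (Pos I1) (Pos I2)),[False,True,False,True,False,False,False]), ((Mk (Pos I4) (Pos I3) (Neg I1) (Neg I2)),[False,True,False,True,False]), ((Mk (Pos I4) (Neg I3) (Pos I1) (Neg I2)),[False,True,False,False,False,True,False]),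 ((Mk (Pos I4) (Neg I3) (Neg I1) (Pos I2)),[False,False,True,True,False,True,True]), ((Mk (Neg I4) (Pos I3) (Pos I1) (Neg I2)),[True,True,False,True,True,False,False]), ((Mk (Neg I4) (Pos I3) (Neg I1) (Pos I2)),[True,True,False,True,True]), ((Mk (Neg I4) (Neg I3) (Pos I1) (Pos I2)),[False,False,False,True,False,True,False,False,False]), ((Mk (Neg I4) (Neg I3) (Neg I1) (Neg I2)),[False,False,False,True,False,True,False]), ((Mk (Pos I4) (Pos I3) (Pos I2) (Pos I1)),[False,True,False,False,False,True,False,False]), ((Mk (Pos I4) (Pos I3) (Neg I2) (Neg I1)),[False,True,False,False,False,True]), ((Mk (Pos I4) (Neg I3) (Pos I2) (Neg I1)),[False,True,False,True,False,False]), ((Mk (Pos I4) (Neg I3) (Neg I2) (Pos I1)),[False,True,False,True]), ((Mk (Neg I4) (Pos I3) (Pos I2) (Neg I1)),[False,False,False,True,False,True,False,False]), ((Mk (Neg I4) (Pos I3) (Neg I2) (Pos I1)),[False,False,False,True,False,True]), ((Mk (Neg I4) (Neg I3) (Pos I2) (Pos I1)),[True,True,False,True,True,False,False,False]), ((Mk (Neg I4) (Neg I3) (Neg I2) (Neg I1)),[True,True,False,True,True,False])]"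

definition a0 :: el where "a0 = (Mk (Pos I1) (Neg I2) (Neg I4) (Pos I3))"

definition b0 :: el where "b0 = (Mk (Pos I2) (Pos I3) (Pos I1) (Pos I4))"

definition X0W0 :: "(el \<times> bool list) list" where "X0W0 = [((Mk (Pos I1) (Neg I2) (Pos I4) (Neg I3)),[False,False,False]), ((Mk (Pos I1) (Neg I2) (Neg I4) (Pos I3)),[False]), ((Mk (Neg I1) (Pos I2) (Pos I4) (Neg I3)),[True,False,True,False,False,False,True,False,True]), ((Mk (Neg I1) (Pos I2) (Neg I4) (Pos I3)),[True,False,False,True,False,False,True,False]), ((Mk (Pos I1) (Pos I3) (Neg I2) (Neg I4)),[True,False,True,True,False,True,False,True]), ((Mk (Pos I1) (Neg I3) (Pos I2) (Neg I4)),[False,True,False,False,True,False,True,False]), ((Mk (Neg I1) (Pos I3) (Neg I2) (Pos I4)),[True,False,True,False,True,True,False]), ((Mk (Neg I1) (Neg I3) (Pos I2) (Pos I4)),[False,False,False,True,True,False,True,False]), ((Mk (Pos I1) (Pos I4) (Neg I3) (Neg I2)),[True,False,False,True,False,True,False,False]), ((Mk (Pos I1) (Neg I4) (Neg I3) (Pos I2)),[False,False,True,False,False,True,False,True]), ((Mk (Neg I1) (Pos I4) (Pos I3) (Neg I2)),[True,True,False,False,False,True]), ((Mk (Neg I1) (Neg I4) (Pos I3) (Pos I2)),[True,True,False,True]), ((Mk (Pos I2) (Neg I1) (Pos I3) (Neg I4)),[False,True,True,False,True,False,True,True]), ((Mk (Pos I2) (Neg I1) (Neg I3) (Pos I4)),[False,True,False,True,True,False,True]),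 ((Mk (Neg I2) (Pos I1) (Pos I3) (Neg I4)),[True,False,True,True,False,True,False]), ((Mk (Neg I2) (Pos I1) (Neg I3) (Pos I4)),[True,True,False,True,False,True,True,False]), ((Mk (Pos I2) (Neg I1) (Pos I4) (Neg I3)),[True,True,False,True,False,False,False,True,True]), ((Mk (Pos I2) (Neg I1) (Neg I4) (Pos I3)),[True,True,False,False,False,True,False,True,True]), ((Mk (Neg I2) (Pos I1) (Pos I4) (Neg I3)),[True,False,False,False,True,True,False,True]), ((Mk (Neg I2) (Pos I1) (Neg I4) (Pos I3)),[True,False,True,True,False,False,False,True]), ((Mk (Pos I2) (Pos I3) (Pos I4) (Pos I1)),[False,False,True,False])]"

definition X0W1 :: "(el \<times> bool list) list" where "X0W1 = [((Mk (Pos I2) (Pos I3) (Neg I4) (Neg I1)),[False,False,True,False,False,False]), ((Mk (Pos I2) (Neg I3) (Pos I4) (Neg I1)),[True,False,False,False]), ((Mk (Pos I2) (Neg I3) (Neg I4) (Pos I1)),[True,False]), ((Mk (Neg I2) (Pos I3) (Pos I4) (Neg I1)),[False,False,True,False,True,False,False,True,True]), ((Mk (Neg I2) (Pos I3) (Neg I4) (Pos I1)),[True,True,False,False,True,False,False,True,False]), ((Mk (Neg I2) (Neg I3) (Pos I4) (Pos I1)),[True,True,False,False,True,True,False]), ((Mk (Neg I2) (Neg I3) (Neg I4) (Neg I1)),[True,False,True,False,False,True,True]), ((Mk (Pos I2) (Pos I4) (Pos I1) (Pos I3)),[True,True,False,False,True,False,True]), ((Mk (Pos I2) (Pos I4)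 (Neg I1) (Neg I3)),[True,True,False,False,True,False,True,False,False]), ((Mk (Pos I2) (Neg I4) (Pos I1) (Neg I3)),[False,True,True,False,False,True,True]), ((Mk (Pos I2) (Neg I4) (Neg I1) (Pos I3)),[False,True,True,False,False,True,True,False,False]), ((Mk (Neg I2) (Pos I4) (Pos I1) (Neg I3)),[False,False,False,True]), ((Mk (Neg I2) (Pos I4) (Neg I1) (Pos I3)),[False,False,False,True,False,False]), ((Mk (Neg I2) (Neg I4) (Pos I1) (Pos I3)),[False,True]), ((Mk (Neg I2) (Neg I4) (Neg I1) (Neg I3)),[False,True,False,False]), ((Mk (Pos I3) (Pos I1) (Pos I4) (Pos I2)),[True,False,False,True,False]), ((Mk (Pos I3) (Pos I1) (Neg I4) (Neg I2)),[True,False,False,True,False,False,False]), ((Mk (Pos I3) (Neg I1) (Pos I4) (Neg I2)),[True,True,False,False,False]), ((Mk (Pos I3) (Neg I1) (Neg I4) (Pos I2)),[True,True,False]), ((Mk (Neg I3) (Pos I1) (Pos I4) (Neg I2)),[False,True,False,False,False,True,False,True]), ((Mk (Neg I3) (Pos I1) (Neg I4) (Pos I2)),[False,False,True,False,False,True,False])]"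

definition X0W2 :: "(el \<times> bool list) list" where "X0W2 = [((Mk (Neg I3) (Neg I1) (Pos I4) (Pos I2)),[False,False,True,True,False]), ((Mk (Neg I3) (Neg I1) (Neg I4) (Neg I2)),[False,False,True,True,False,False,False]), ((Mk (Pos I3) (Pos I2) (Neg I1) (Neg I4)),[False,True,True,False,True,False,True]), ((Mk (Pos I3) (Neg I2) (Neg I1) (Pos I4)),[True,False,True,False,True,True,False,True]), ((Mk (Neg I3) (Pos I2) (Pos I1) (Neg I4)),[False,True,False,True,True,False,False,False]), ((Mk (Neg I3) (Neg I2) (Pos I1) (Pos I4)),[False,True,False,True,False,False,True,False]), ((Mk (Pos I3) (Pos I4) (Neg I1) (Neg I2)),[False,False,False,True,True,False,True,True]), ((Mk (Pos I3) (Neg I4) (Neg I1) (Pos I2)),[False,False,True,False,True,False]), ((Mk (Neg I3) (Pos I4) (Pos I1) (Neg I2)),[True,False,True,False,False,False]), ((Mk (Neg I3) (Neg I4) (Pos I1) (Pos I2)),[True,False,False,False,True,False]), ((Mk (Pos I3) (Pos I4) (Pos I2) (Pos I1)),[False,False,True,False,True]), ((Mk (Pos I3) (Pos I4) (Neg I2) (Neg I1)),[False,False,True,False,True,False,False]), ((Mk (Pos I3) (Neg I4) (Pos I2) (Neg I1)),[False,False,True,False,False,False,True]), ((Mk (Pos I3) (Neg I4) (Neg I2) (Pos I1)),[False,False,True,False,False,False,True,False,False]), ((Mk (Neg I3) (Pos I4) (Pos I2) (Neg I1)),[True,False,False,False,True]), ((Mk (Neg I3) (Pos I4) (Neg I2)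 (Pos I1)),[True,False,False,False,True,False,False]), ((Mk (Neg I3) (Neg I4) (Pos I2) (Pos I1)),[True,False,True]), ((Mk (Neg I3) (Neg I4) (Neg I2) (Neg I1)),[True,False,True,False,False]), ((Mk (Pos I4) (Pos I1) (Pos I2) (Pos I3)),[False,False,False,True,True,False,False]), ((Mk (Pos I4) (Pos I1) (Neg I2) (Neg I3)),[False,False,False,True,True]), ((Mk (Pos I4) (Neg I1) (Pos I2) (Neg I3)),[True,False,True,False,False,False,True,False])]"

definition X0W3 :: "(el \<times> bool list) list" where "X0W3 = [((Mk (Pos I4) (Neg I1) (Neg I2) (Pos I3)),[False,False,False,True,False,False,True]), ((Mk (Neg I4) (Pos I1) (Pos I2) (Neg I3)),[False,True,True,False,False]), ((Mk (Neg I4) (Pos I1) (Neg I2) (Pos I3)),[False,True,True]), ((Mk (Neg I4) (Neg I1) (Pos I2) (Pos I3)),[False,True,False,False,True,False,False]), ((Mk (Neg I4) (Neg I1) (Neg I2) (Neg I3)),[False,True,False,False,True]), ((Mk (Pos I4) (Pos I2) (Neg I3) (Neg I1)),[True,False,False,False,True,True]), ((Mk (Pos I4) (Neg I2) (Pos I3) (Neg I1)),[False,False,True,False,True,False,False,True]), ((Mk (Neg I4) (Pos I2) (Neg I3) (Pos I1)),[True,False,True,True]), ((Mk (Neg I4) (Neg I2) (Pos I3) (Pos I1)),[True,False,True,False,False,True,False,False]), ((Mk (Pos I4) (Pos I3) (Pos I1) (Pos I2)),[False,True,False,True,False,False,False]), ((Mk (Pos I4) (Pos I3) (Neg I1) (Neg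 I2)),[False,True,False,True,False]), ((Mk (Pos I4) (Neg I3) (Pos I1) (Neg I2)),[False,True,False,False,False,True,False]), ((Mk (Pos I4) (Neg I3) (Neg I1) (Pos I2)),[False,False,True,True,False,True,True]), ((Mk (Neg I4) (Pos I3) (Pos I1) (Neg I2)),[True,True,False,True,True,False,False]), ((Mk (Neg I4) (Pos I3) (Neg I1) (Pos I2)),[True,True,False,True,True]), ((Mk (Neg I4) (Neg I3) (Pos I1) (Pos I2)),[False,False,False,True,False,True,False,False,False]), ((Mk (Neg I4) (Neg I3) (Neg I1) (Neg I2)),[False,False,False,True,False,True,False]), ((Mk (Pos I4) (Pos I3) (Neg I2) (Neg I1)),[False,True,False,False,False,True]), ((Mk (Pos I4) (Neg I3) (Pos I2) (Neg I1)),[False,True,False,True,False,False]), ((Mk (Neg I4) (Pos I3) (Neg I2) (Pos I1)),[False,False,False,True,False,True]), ((Mk (Neg I4) (Neg I3) (Pos I2) (Pos I1)),[True,True,False,True,True,False,False,False])]"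

definition X0W :: "(el \<times> bool list) list" where "X0W = X0W0 @ X0W1 @ X0W2 @ X0W3"

definition Y0W :: "(el \<times> bool list) list" where "Y0W = [((Mk (Pos I1) (Pos I3) (Pos I4) (Pos I2)),[False,True,False,False,True,False,True,False,False]), ((Mk (Pos I1) (Pos I3) (Neg I4) (Neg I2)),[False,True,False,False,True,False,True]), ((Mk (Pos I1) (Neg I3) (Pos I4) (Neg I2)),[True,False,True,False,False,False,True,True]), ((Mk (Pos I1) (Neg I3) (Neg I4) (Pos I2)),[True,False,False,False,True,False,True,True]), ((Mk (Pos I1) (Pos I4) (Pos I2) (Pos I3)),[True,False,False,True,False,False,False,True,False]), ((Mk (Pos I1) (Pos I4) (Neg I2) (Neg I3)),[False,False,True,False,False,True,False,True,False]), ((Mk (Pos I1) (Neg I4) (Pos I2) (Neg I3)),[True,False,False,True,False,True,False,False,False]), ((Mk (Pos I1) (Neg I4) (Neg I2) (Pos I3)),[True,False,False,True,False,True,False]), ((Mk (Pos I2) (Pos I3) (Pos I1) (Pos I4)),[True]), ((Mk (Pos I2) (Neg I3) (Neg I1) (Pos I4)),[False,False,True,False,False]), ((Mk (Neg I2) (Pos I3) (Neg I1) (Pos I4)),[True,True,False,False,True,True,False,False]), ((Mk (Neg I2) (Neg I3) (Pos I1) (Pos I4)),[True,True,False,False,True,False,False,True]), ((Mk (Pos I2) (Pos I4) (Pos I3) (Pos I1)),[False,True,True,False,False,True,True,False]), ((Mk (Pos I2) (Neg I4) (Pos I3) (Neg I1)),[True,True,False,False,True,False,True,False,False,False]), ((Mk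 (Neg I2) (Pos I4) (Pos I3) (Neg I1)),[False,True,False,False,False]), ((Mk (Neg I2) (Neg I4) (Pos I3) (Pos I1)),[False,False,False,True,False]), ((Mk (Pos I3) (Pos I1) (Pos I2) (Pos I4)),[True,True]), ((Mk (Pos I3) (Neg I1) (Neg I2) (Pos I4)),[True,False,False,True,False,False]), ((Mk (Neg I3) (Pos I1) (Neg I2) (Pos I4)),[False,False,True,True,False,False]), ((Mk (Neg I3) (Neg I1) (Pos I2) (Pos I4)),[False,False,True,False,False,True]), ((Mk (Pos I3) (Pos I2) (Pos I4) (Pos I1)),[False,True,False,False,False,True,False,False,True]), ((Mk (Pos I3) (Pos I2) (Neg I4) (Neg I1)),[True,False,True,False,True,True,False,True,False]), ((Mk (Neg I3) (Pos I2) (Pos I4) (Neg I1)),[False,True,False,True,False,False,True]), ((Mk (Neg I3) (Pos I2) (Neg I4) (Pos I1)),[False,True,False,True,False,False,True,False,False]), ((Mk (Pos I4) (Pos I1) (Pos I3) (Pos I2)),[True,False,True,False,False,False,True,False,False]), ((Mk (Pos I4) (Neg I1) (Pos I3) (Neg I2)),[False,False,False,True,True,False]), ((Mk (Neg I4) (Pos I1) (Pos I3) (Neg I2)),[False,True,False,False,True,False]), ((Mk (Neg I4) (Neg I1) (Pos I3) (Pos I2)),[False,True,True,False,False,False]), ((Mk (Pos I4) (Pos I2) (Pos I1) (Pos I3)),[False,False,True,False,True,False,False,True,False]), ((Mk (Pos I4) (Pos I2) (Neg I1) (Neg I3)),[True,True,False,True,False,False,False,True]), ((Mk (Neg I4)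 (Pos I2) (Pos I1) (Neg I3)),[True,False,True,False,False,True,False]), ((Mk (Neg I4) (Pos I2) (Neg I1) (Pos I3)),[True,True,False,False,False,True,False,True])]"

definition GOOD :: "((el \<times> el) \<times> (el \<times> el \<times> bool \<times> bool list \<times> bool list)) list" where "GOOD = [(((Mk (Pos I2) (Neg I3) (Neg I4) (Pos I1)),(Mk (Pos I2) (Pos I3) (Pos I1) (Pos I4))),((Mk (Pos I1) (Pos I2) (Pos I4) (Neg I3)),(Mk (Pos I1) (Pos I2) (Neg I4) (Pos I3)),False,[False],[False,True,True,False,False,True,True,False])), (((Mk (Neg I2) (Pos I3) (Neg I4) (Pos I1)),(Mk (Pos I1) (Pos I4) (Neg I2) (Neg I3))),((Mk (Pos I1) (Neg I2) (Pos I4) (Neg I3)),(Mk (Pos I1) (Neg I2) (Neg I4) (Pos I3)),False,[False],[False,False,False,True,False])), (((Mk (Pos I2) (Pos I3) (Neg I4) (Neg I1)),(Mk (Neg I3) (Pos I2) (Neg I4) (Pos I1))),((Mk (Pos I1) (Pos I2) (Neg I4) (Pos I3)),(Mk (Pos I1) (Pos I2) (Pos I4) (Neg I3)),False,[False],[True,True,False,False,True,False,True,False,False,False])), (((Mk (Neg I2) (Neg I3) (Neg I4) (Neg I1)),(Mk (Pos I4) (Neg I1) (Pos I3) (Neg I2))),((Mk (Pos I1) (Neg I2) (Neg I4) (Pos I3)),(Mk (Pos I1) (Neg I2) (Pos I4) (Neg I3)),False,[False],[False,True,False,False,False])), (((Mk (Pos I2) (Pos I4) (Pos I1) (Pos I3)),(Mk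 (Neg I4) (Neg I1) (Pos I3) (Pos I2))),((Mk (Pos I1) (Pos I2) (Pos I3) (Pos I4)),(Mk (Pos I1) (Pos I2) (Pos I3) (Pos I4)),False,[False],[True])), (((Mk (Neg I2) (Neg I4) (Pos I1) (Pos I3)),(Mk (Pos I2) (Pos I3) (Pos I1) (Pos I4))),((Mk (Pos I1) (Neg I2) (Pos I3) (Pos I4)),(Mk (Pos I1) (Neg I2) (Pos I3) (Pos I4)),False,[False],[True,True,False,False,True,False,False,True])), (((Mk (Pos I2) (Neg I4) (Neg I1) (Pos I3)),(Mk (Neg I3) (Pos I2) (Neg I4) (Pos I1))),((Mk (Pos I1) (Pos I2) (Neg I3) (Neg I4)),(Mk (Pos I1) (Pos I2) (Neg I3) (Neg I4)),False,[False],[False,False,True,False,False])), (((Mk (Neg I2) (Pos I4) (Neg I1) (Pos I3)),(Mk (Pos I1) (Pos I4) (Neg I2) (Neg I3))),((Mk (Pos I1) (Neg I2) (Neg I3) (Neg I4)),(Mk (Pos I1) (Neg I2) (Neg I3) (Neg I4)),False,[False],[True,True,False,False,True,True,False,False])), (((Mk (Neg I3) (Pos I1) (Neg I4) (Pos I2)),(Mk (Neg I3) (Pos I2) (Pos I4) (Neg I1))),((Mk (Pos I1) (Pos I2) (Neg I3) (Pos I4)),(Mk (Pos I1) (Pos I2) (Neg I3) (Pos I4)),False,[False,False,False],[False,False,True,False,False])), (((Mk (Pos I3) (Pos I1) (Neg I4) (Neg I2)),(Mk (Pos I4) (Neg I1) (Pos I3) (Neg I2))),((Mk (Pos I1) (Pos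 I2) (Pos I3) (Neg I4)),(Mk (Pos I1) (Pos I2) (Pos I3) (Neg I4)),False,[False,False,False],[True])), (((Mk (Pos I3) (Neg I1) (Neg I4) (Pos I2)),(Mk (Pos I2) (Pos I3) (Pos I1) (Pos I4))),((Mk (Pos I1) (Neg I2) (Pos I3) (Neg I4)),(Mk (Pos I1) (Neg I2) (Pos I3) (Neg I4)),False,[False,False,False],[True,True,False,False,True,False,False,True])), (((Mk (Neg I3) (Neg I1) (Neg I4) (Neg I2)),(Mk (Pos I1) (Neg I4) (Neg I2) (Pos I3))),((Mk (Pos I1) (Neg I2) (Neg I3) (Pos I4)),(Mk (Pos I1) (Neg I2) (Neg I3) (Pos I4)),False,[False,False,False],[True,True,False,False,True,True,False,False])), (((Mk (Pos I3) (Pos I4) (Pos I2) (Pos I1)),(Mk (Neg I2) (Pos I3) (Neg I1) (Pos I4))),((Mk (Pos I2) (Neg I3) (Neg I4) (Pos I1)),(Mk (Pos I4) (Pos I1) (Neg I2) (Neg I3)),True,[True,False,True,True],[True,False,True,False,False,False,True,True])), (((Mk (Pos I3) (Pos I4) (Pos I2) (Pos I1)),(Mk (Pos I4) (Neg I1) (Pos I3) (Neg I2))),((Mk (Pos I1) (Pos I3) (Pos I4) (Pos I2)),(Mk (Pos I1) (Pos I4) (Pos I2) (Pos I3)),True,[True,False,False,True,False,True,False,False],[False,True,False,False,False,True,False,False,True])), (((Mk (Neg I3) (Neg I4) (Pos I2) (Pos I1)),(Mk (Pos I2) (Pos I3) (Pos I1) (Pos I4))),((Mk (Pos I1) (Neg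 I2) (Neg I3) (Pos I4)),(Mk (Pos I1) (Neg I2) (Neg I3) (Pos I4)),True,[False,False,False],[True,True,False,False,True,True,False,False])), (((Mk (Neg I3) (Neg I4) (Pos I2) (Pos I1)),(Mk (Pos I4) (Pos I1) (Pos I3) (Pos I2))),((Mk (Pos I1) (Neg I2) (Pos I4) (Neg I3)),(Mk (Pos I1) (Neg I2) (Neg I4) (Pos I3)),True,[False],[False,False,False,True,False])), (((Mk (Pos I3) (Neg I4) (Neg I2) (Pos I1)),(Mk (Pos I1) (Pos I4) (Neg I2) (Neg I3))),((Mk (Pos I1) (Pos I3) (Pos I4) (Neg I2)),(Mk (Pos I1) (Neg I4) (Pos I2) (Pos I3)),True,[False,False,True,False,False,True,False,True],[False,True,False,False,False,True,False,False,True])), (((Mk (Pos I3) (Neg I4) (Neg I2) (Pos I1)),(Mk (Neg I3) (Pos I2) (Neg I4) (Pos I1))),((Mk (Pos I2) (Pos I3) (Pos I4) (Neg I1)),(Mk (Neg I4) (Pos I1) (Pos I2) (Pos I3)),True,[True,False,True,True],[False,True,False,False,True,False,True,False,False])), (((Mk (Neg I3) (Pos I4) (Neg I2) (Pos I1)),(Mk (Pos I1) (Neg I4) (Neg I2) (Pos I3))),((Mk (Pos I1) (Pos I2) (Pos I4) (Neg I3)),(Mk (Pos I1) (Pos I2) (Neg I4) (Pos I3)),True,[False],[False,True,True,False,False,True,True,False])), (((Mk (Neg I3) (Pos I4) (Neg I2) (Pos I1)),(Mk (Pos I3) (Pos I2) (Pos I4) (Pos I1))),((Mk (Pos I1) (Pos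 I2) (Neg I3) (Pos I4)),(Mk (Pos I1) (Pos I2) (Neg I3) (Pos I4)),True,[False,False,False],[False,False,True,False,False])), (((Mk (Pos I3) (Neg I4) (Pos I2) (Neg I1)),(Mk (Pos I1) (Pos I4) (Pos I2) (Pos I3))),((Mk (Pos I1) (Pos I2) (Pos I3) (Neg I4)),(Mk (Pos I1) (Pos I2) (Pos I3) (Neg I4)),True,[False,False,False],[True])), (((Mk (Pos I3) (Neg I4) (Pos I2) (Neg I1)),(Mk (Neg I3) (Pos I2) (Pos I4) (Neg I1))),((Mk (Pos I1) (Pos I2) (Neg I4) (Pos I3)),(Mk (Pos I1) (Pos I2) (Pos I4) (Neg I3)),True,[False],[True,True,False,False,True,False,True,False,False,False])), (((Mk (Neg I3) (Pos I4) (Pos I2) (Neg I1)),(Mk (Pos I1) (Neg I4) (Pos I2) (Neg I3))),((Mk (Pos I2) (Neg I3) (Neg I4) (Neg I1)),(Mk (Neg I4) (Pos I1) (Neg I2) (Neg I3)),True,[True,False,False,False,True,True],[True,False,True,False,False,False,True,True])), (((Mk (Neg I3) (Pos I4) (Pos I2) (Neg I1)),(Mk (Pos I3) (Pos I2) (Neg I4) (Neg I1))),((Mk (Pos I1) (Neg I3) (Neg I4) (Neg I2)),(Mk (Pos I1) (Neg I4) (Neg I2) (Neg I3)),True,[True,False,False,True,False,True,False,False],[False,True,False,True,False,False,True])), (((Mk (Pos I3) (Pos I4) (Neg I2) (Neg I1)),(Mk (Pos I2) (Neg I3) (Neg I1) (Pos I4))),((Mk (Pos I1) (Neg I2) (Neg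 I4) (Pos I3)),(Mk (Pos I1) (Neg I2) (Pos I4) (Neg I3)),True,[False],[False,True,False,False,False])), (((Mk (Pos I3) (Pos I4) (Neg I2) (Neg I1)),(Mk (Neg I4) (Pos I1) (Pos I3) (Neg I2))),((Mk (Pos I1) (Neg I2) (Pos I3) (Neg I4)),(Mk (Pos I1) (Neg I2) (Pos I3) (Neg I4)),True,[False,False,False],[True,True,False,False,True,False,False,True])), (((Mk (Neg I3) (Neg I4) (Neg I2) (Neg I1)),(Mk (Neg I2) (Neg I3) (Pos I1) (Pos I4))),((Mk (Pos I1) (Neg I3) (Neg I4) (Pos I2)),(Mk (Pos I1) (Pos I4) (Neg I2) (Neg I3)),True,[False,False,True,False,False,True,False,True],[False,True,False,True,False,False,True])), (((Mk (Neg I3) (Neg I4) (Neg I2) (Neg I1)),(Mk (Neg I4) (Neg I1) (Pos I3) (Pos I2))),((Mk (Pos I2) (Pos I3) (Pos I4) (Pos I1)),(Mk (Pos I4) (Pos I1) (Pos I2) (Pos I3)),True,[True,False,False,False,True,True],[False,True,False,False,True,False,True,False,False])), (((Mk (Pos I4) (Pos I1) (Pos I2) (Pos I3)),(Mk (Neg I3) (Pos I2) (Pos I4) (Neg I1))),((Mk (Pos I1) (Pos I2) (Pos I4) (Pos I3)),(Mk (Pos I1) (Pos I2) (Pos I4) (Pos I3)),False,[False,False,False],[False,True,True,False,False,True,True,False])), (((Mk (Neg I4) (Pos I1) (Neg I2) (Pos I3)),(Mk (Pos I2) (Pos I3) (Pos I1) (Pos I4))),((Mk (Pos I1) (Pos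 I2) (Neg I4) (Neg I3)),(Mk (Pos I1) (Pos I2) (Neg I4) (Neg I3)),False,[False,False,False],[True,True,False,False,True,False,True,False,False,False])), (((Mk (Neg I4) (Neg I1) (Pos I2) (Pos I3)),(Mk (Pos I1) (Neg I4) (Neg I2) (Pos I3))),((Mk (Pos I1) (Neg I2) (Neg I4) (Neg I3)),(Mk (Pos I1) (Neg I2) (Neg I4) (Neg I3)),False,[False,False,False],[False,True,False,False,False])), (((Mk (Pos I4) (Neg I1) (Neg I2) (Pos I3)),(Mk (Neg I4) (Neg I1) (Pos I3) (Pos I2))),((Mk (Pos I1) (Neg I2) (Pos I4) (Pos I3)),(Mk (Pos I1) (Neg I2) (Pos I4) (Pos I3)),False,[False,False,False],[False,False,False,True,False])), (((Mk (Pos I4) (Pos I3) (Pos I1) (Pos I2)),(Mk (Pos I1) (Neg I4) (Pos I2) (Neg I3))),((Mk (Pos I1) (Pos I2) (Pos I3) (Pos I4)),(Mk (Pos I1) (Pos I2) (Pos I3) (Pos I4)),True,[False],[True])), (((Mk (Pos I4) (Pos I3) (Pos I1) (Pos I2)),(Mk (Neg I3) (Pos I2) (Neg I4) (Pos I1))),((Mk (Pos I1) (Pos I2) (Pos I4) (Pos I3)),(Mk (Pos I1) (Pos I2) (Pos I4) (Pos I3)),True,[False,False,False],[False,True,True,False,False,True,True,False])), (((Mk (Neg I4) (Neg I3) (Pos I1) (Pos I2)),(Mk (Pos I1) (Neg I4) (Neg I2) (Pos I3))),((Mk (Pos I1) (Pos I3) (Neg I4) (Neg I2)),(Mk (Pos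 I1) (Neg I4) (Pos I2) (Neg I3)),True,[True,False,False,True,False,True,False,False],[True,False,True,False,True,True,False,True,False])), (((Mk (Neg I4) (Neg I3) (Pos I1) (Pos I2)),(Mk (Neg I3) (Pos I2) (Pos I4) (Neg I1))),((Mk (Pos I2) (Pos I3) (Neg I4) (Neg I1)),(Mk (Neg I4) (Pos I1) (Pos I2) (Neg I3)),True,[True,False,False,False,True,True],[False,True,False,False,True,False,True])), (((Mk (Neg I4) (Pos I3) (Pos I1) (Neg I2)),(Mk (Neg I2) (Pos I3) (Neg I1) (Pos I4))),((Mk (Pos I2) (Neg I3) (Pos I4) (Pos I1)),(Mk (Pos I4) (Pos I1) (Neg I2) (Pos I3)),True,[True,False,False,False,True,True],[True,False,False,False,True,False,True,True])), (((Mk (Neg I4) (Pos I3) (Pos I1) (Neg I2)),(Mk (Neg I4) (Neg I1) (Pos I3) (Pos I2))),((Mk (Pos I1) (Pos I3) (Neg I4) (Pos I2)),(Mk (Pos I1) (Pos I4) (Pos I2) (Neg I3)),True,[False,False,True,False,False,True,False,True],[True,False,True,False,True,True,False,True,False])), (((Mk (Pos I4) (Neg I3) (Pos I1) (Neg I2)),(Mk (Pos I2) (Neg I3) (Neg I1) (Pos I4))),((Mk (Pos I1) (Neg I2) (Pos I4) (Pos I3)),(Mk (Pos I1) (Neg I2) (Pos I4) (Pos I3)),True,[False,False,False],[False,False,False,True,False])), (((Mk (Pos I4) (Neg I3) (Pos I1) (Neg I2)),(Mk (Pos I4) (Pos I1) (Pos I3) (Pos I2))),((Mk (Pos I1) (Neg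 I2) (Pos I3) (Pos I4)),(Mk (Pos I1) (Neg I2) (Pos I3) (Pos I4)),True,[False],[True,True,False,False,True,False,False,True])), (((Mk (Neg I4) (Pos I3) (Neg I1) (Pos I2)),(Mk (Pos I2) (Pos I3) (Pos I1) (Pos I4))),((Mk (Pos I1) (Neg I2) (Neg I3) (Neg I4)),(Mk (Pos I1) (Neg I2) (Neg I3) (Neg I4)),True,[False],[True,True,False,False,True,True,False,False])), (((Mk (Neg I4) (Pos I3) (Neg I1) (Pos I2)),(Mk (Neg I4) (Pos I1) (Pos I3) (Neg I2))),((Mk (Pos I1) (Neg I2) (Neg I4) (Neg I3)),(Mk (Pos I1) (Neg I2) (Neg I4) (Neg I3)),True,[False,False,False],[False,True,False,False,False])), (((Mk (Pos I4) (Neg I3) (Neg I1) (Pos I2)),(Mk (Neg I2) (Neg I3) (Pos I1) (Pos I4))),((Mk (Pos I1) (Neg I3) (Pos I4) (Pos I2)),(Mk (Pos I1) (Pos I4) (Neg I2) (Pos I3)),True,[True,False,False,True,False,True,False,False],[False,True,False,True,False,False,True,False,False])), (((Mk (Pos I4) (Neg I3) (Neg I1) (Pos I2)),(Mk (Pos I4) (Neg I1) (Pos I3) (Neg I2))),((Mk (Pos I2) (Pos I3) (Neg I4) (Pos I1)),(Mk (Pos I4) (Pos I1) (Pos I2) (Neg I3)),True,[True,False,True,True],[False,True,False,False,True,False,True])), (((Mk (Pos I4) (Pos I3) (Neg I1) (Neg I2)),(Mk (Pos I1) (Pos I4) (Pos I2) (Pos I3))),((Mk (Pos I2) (Neg I3)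 (Pos I4) (Neg I1)),(Mk (Neg I4) (Pos I1) (Neg I2) (Pos I3)),True,[True,False,True,True],[True,False,False,False,True,False,True,True])), (((Mk (Pos I4) (Pos I3) (Neg I1) (Neg I2)),(Mk (Pos I3) (Pos I2) (Pos I4) (Pos I1))),((Mk (Pos I1) (Neg I3) (Pos I4) (Neg I2)),(Mk (Pos I1) (Neg I4) (Neg I2) (Pos I3)),True,[False,False,True,False,False,True,False,True],[False,True,False,True,False,False,True,False,False])), (((Mk (Neg I4) (Neg I3) (Neg I1) (Neg I2)),(Mk (Pos I1) (Pos I4) (Neg I2) (Neg I3))),((Mk (Pos I1) (Pos I2) (Neg I4) (Neg I3)),(Mk (Pos I1) (Pos I2) (Neg I4) (Neg I3)),True,[False,False,False],[True,True,False,False,True,False,True,False,False,False])), (((Mk (Neg I4) (Neg I3) (Neg I1) (Neg I2)),(Mk (Pos I3) (Pos I2) (Neg I4) (Neg I1))),((Mk (Pos I1) (Pos I2) (Neg I3) (Neg I4)),(Mk (Pos I1) (Pos I2) (Neg I3) (Neg I4)),True,[False],[False,False,True,False,False]))]"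

definition INN :: "((el \<times> el) \<times> (el \<times> el)) list" where "INN = [(((Mk (Pos I1) (Neg I2) (Neg I4) (Pos I3)),(Mk (Pos I2) (Pos I3) (Pos I1) (Pos I4))),((Mk (Pos I1) (Pos I2) (Pos I3) (Pos I4)),(Mk (Pos I1) (Pos I2) (Pos I3) (Pos I4)))), (((Mk (Pos I1) (Neg I3) (Pos I2) (Neg I4)),(Mk (Pos I4) (Pos I1) (Pos I3) (Pos I2))),((Mk (Pos I1) (Pos I4) (Pos I2) (Pos I3)),(Mk (Pos I1) (Pos I3) (Pos I4) (Pos I2)))), (((Mk (Pos I1) (Neg I3) (Pos I2) (Neg I4)),(Mk (Pos I4) (Neg I1) (Pos I3) (Neg I2))),((Mk (Pos I1) (Pos I4) (Neg I2) (Neg I3)),(Mk (Pos I1) (Neg I3) (Neg I4) (Pos I2)))), (((Mk (Pos I1) (Pos I3) (Neg I2) (Neg I4)),(Mk (Neg I4) (Pos I1) (Pos I3) (Neg I2))),((Mk (Pos I1) (Neg I4) (Pos I2) (Neg I3)),(Mk (Pos I1) (Pos I3) (Neg I4) (Neg I2)))), (((Mk (Pos I1) (Pos I3) (Neg I2) (Neg I4)),(Mk (Neg I4) (Neg I1) (Pos I3) (Pos I2))),((Mk (Pos I1) (Neg I4) (Neg I2) (Pos I3)),(Mk (Pos I1) (Neg I3) (Pos I4) (Neg I2)))), (((Mk (Neg I1) (Neg I3) (Pos I2) (Pos I4)),(Mk (Pos I3) (Pos I2) (Neg I4) (Neg I1))),((Mk (Neg I4) (Pos I1) (Pos I3) (Neg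 I2)),(Mk (Pos I2) (Neg I4) (Pos I3) (Neg I1)))), (((Mk (Neg I1) (Neg I3) (Pos I2) (Pos I4)),(Mk (Neg I3) (Pos I2) (Pos I4) (Neg I1))),((Mk (Neg I4) (Pos I1) (Neg I3) (Pos I2)),(Mk (Pos I2) (Pos I4) (Neg I3) (Neg I1)))), (((Mk (Neg I1) (Pos I3) (Neg I2) (Pos I4)),(Mk (Pos I3) (Pos I2) (Pos I4) (Pos I1))),((Mk (Pos I4) (Pos I1) (Pos I3) (Pos I2)),(Mk (Pos I2) (Pos I4) (Pos I3) (Pos I1)))), (((Mk (Neg I1) (Pos I3) (Neg I2) (Pos I4)),(Mk (Neg I3) (Pos I2) (Neg I4) (Pos I1))),((Mk (Pos I4) (Pos I1) (Neg I3) (Neg I2)),(Mk (Pos I2) (Neg I4) (Neg I3) (Pos I1)))), (((Mk (Pos I1) (Neg I4) (Neg I3) (Pos I2)),(Mk (Neg I3) (Pos I2) (Neg I4) (Pos I1))),((Mk (Pos I1) (Neg I3) (Pos I4) (Neg I2)),(Mk (Pos I1) (Neg I4) (Neg I2) (Pos I3)))), (((Mk (Pos I1) (Neg I4) (Neg I3) (Pos I2)),(Mk (Neg I3) (Pos I2) (Pos I4) (Neg I1))),((Mk (Pos I1) (Neg I3) (Neg I4) (Pos I2)),(Mk (Pos I1) (Pos I4) (Neg I2) (Neg I3)))), (((Mk (Pos I1) (Pos I4) (Neg I3) (Neg I2)),(Mk (Pos I3) (Pos I2) (Pos I4) (Pos I1))),((Mk (Pos I1) (Pos I3) (Pos I4)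 (Pos I2)),(Mk (Pos I1) (Pos I4) (Pos I2) (Pos I3)))), (((Mk (Pos I1) (Pos I4) (Neg I3) (Neg I2)),(Mk (Pos I3) (Pos I2) (Neg I4) (Neg I1))),((Mk (Pos I1) (Pos I3) (Neg I4) (Neg I2)),(Mk (Pos I1) (Neg I4) (Pos I2) (Neg I3)))), (((Mk (Neg I1) (Neg I4) (Pos I3) (Pos I2)),(Mk (Pos I2) (Pos I3) (Pos I1) (Pos I4))),((Mk (Pos I3) (Pos I1) (Pos I2) (Pos I4)),(Mk (Pos I2) (Pos I3) (Pos I1) (Pos I4)))), (((Mk (Neg I1) (Neg I4) (Pos I3) (Pos I2)),(Mk (Neg I2) (Neg I3) (Pos I1) (Pos I4))),((Mk (Pos I3) (Pos I1) (Neg I2) (Neg I4)),(Mk (Pos I2) (Neg I3) (Pos I1) (Neg I4)))), (((Mk (Neg I1) (Pos I4) (Pos I3) (Neg I2)),(Mk (Pos I2) (Neg I3) (Neg I1) (Pos I4))),((Mk (Neg I3) (Pos I1) (Pos I2) (Neg I4)),(Mk (Pos I2) (Pos I3) (Neg I1) (Neg I4)))), (((Mk (Neg I1) (Pos I4) (Pos I3) (Neg I2)),(Mk (Neg I2) (Pos I3) (Neg I1) (Pos I4))),((Mk (Neg I3) (Pos I1) (Neg I2) (Pos I4)),(Mk (Pos I2) (Neg I3) (Neg I1) (Pos I4)))), (((Mk (Neg I3) (Pos I2) (Pos I1) (Neg I4)),(Mk (Pos I1) (Neg I4) (Pos I2) (Neg I3))),((Mk (Neg I2) (Pos I4) (Neg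 I3) (Pos I1)),(Mk (Pos I4) (Neg I1) (Neg I3) (Pos I2)))), (((Mk (Neg I3) (Pos I2) (Pos I1) (Neg I4)),(Mk (Pos I1) (Neg I4) (Neg I2) (Pos I3))),((Mk (Pos I2) (Neg I4) (Neg I3) (Pos I1)),(Mk (Pos I4) (Pos I1) (Neg I3) (Neg I2)))), (((Mk (Neg I3) (Neg I2) (Pos I1) (Pos I4)),(Mk (Pos I4) (Pos I1) (Pos I3) (Pos I2))),((Mk (Pos I4) (Pos I2) (Pos I1) (Pos I3)),(Mk (Pos I3) (Pos I2) (Pos I4) (Pos I1)))), (((Mk (Neg I3) (Neg I2) (Pos I1) (Pos I4)),(Mk (Neg I4) (Neg I1) (Pos I3) (Pos I2))),((Mk (Neg I4) (Neg I2) (Pos I1) (Pos I3)),(Mk (Pos I3) (Neg I2) (Pos I4) (Neg I1)))), (((Mk (Pos I3) (Pos I2) (Neg I1) (Neg I4)),(Mk (Pos I1) (Pos I4) (Pos I2) (Pos I3))),((Mk (Pos I2) (Pos I4) (Pos I3) (Pos I1)),(Mk (Pos I4) (Pos I1) (Pos I3) (Pos I2)))), (((Mk (Pos I3) (Pos I2) (Neg I1) (Neg I4)),(Mk (Pos I1) (Pos I4) (Neg I2) (Neg I3))),((Mk (Neg I2) (Neg I4) (Pos I3) (Pos I1)),(Mk (Pos I4) (Neg I1) (Pos I3) (Neg I2)))), (((Mk (Pos I3) (Neg I2) (Neg I1) (Pos I4)),(Mk (Neg I4) (Pos I1) (Pos I3) (Neg I2))),((Mk (Neg I4) (Pos I2)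 (Pos I1) (Neg I3)),(Mk (Pos I3) (Pos I2) (Neg I4) (Neg I1)))), (((Mk (Pos I3) (Neg I2) (Neg I1) (Pos I4)),(Mk (Pos I4) (Neg I1) (Pos I3) (Neg I2))),((Mk (Pos I4) (Neg I2) (Pos I1) (Neg I3)),(Mk (Pos I3) (Neg I2) (Neg I4) (Pos I1)))), (((Mk (Neg I4) (Pos I2) (Neg I3) (Pos I1)),(Mk (Pos I2) (Pos I3) (Pos I1) (Pos I4))),((Mk (Pos I2) (Pos I3) (Pos I1) (Pos I4)),(Mk (Pos I3) (Pos I1) (Pos I2) (Pos I4)))), (((Mk (Neg I4) (Pos I2) (Neg I3) (Pos I1)),(Mk (Neg I2) (Pos I3) (Neg I1) (Pos I4))),((Mk (Neg I2) (Neg I3) (Pos I1) (Pos I4)),(Mk (Pos I3) (Neg I1) (Neg I2) (Pos I4)))), (((Mk (Neg I4) (Neg I2) (Pos I3) (Pos I1)),(Mk (Pos I1) (Neg I4) (Neg I2) (Pos I3))),((Mk (Neg I3) (Pos I2) (Neg I4) (Pos I1)),(Mk (Pos I4) (Pos I2) (Neg I1) (Neg I3)))), (((Mk (Neg I4) (Neg I2) (Pos I3) (Pos I1)),(Mk (Pos I1) (Pos I4) (Neg I2) (Neg I3))),((Mk (Pos I3) (Neg I2) (Neg I4) (Pos I1)),(Mk (Pos I4) (Neg I2) (Pos I1) (Neg I3)))), (((Mk (Pos I4) (Pos I2) (Neg I3) (Neg I1)),(Mk (Neg I2) (Neg I3) (Pos I1) (Pos I4))),((Mk (Neg I2) (Pos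 I3) (Pos I1) (Neg I4)),(Mk (Pos I3) (Neg I1) (Pos I2) (Neg I4)))), (((Mk (Pos I4) (Pos I2) (Neg I3) (Neg I1)),(Mk (Pos I2) (Neg I3) (Neg I1) (Pos I4))),((Mk (Pos I2) (Neg I3) (Pos I1) (Neg I4)),(Mk (Pos I3) (Pos I1) (Neg I2) (Neg I4)))), (((Mk (Pos I4) (Neg I2) (Pos I3) (Neg I1)),(Mk (Pos I1) (Pos I4) (Pos I2) (Pos I3))),((Mk (Pos I3) (Pos I2) (Pos I4) (Pos I1)),(Mk (Pos I4) (Pos I2) (Pos I1) (Pos I3)))), (((Mk (Pos I4) (Neg I2) (Pos I3) (Neg I1)),(Mk (Pos I1) (Neg I4) (Pos I2) (Neg I3))),((Mk (Neg I3) (Neg I2) (Pos I4) (Pos I1)),(Mk (Pos I4) (Neg I2) (Neg I1) (Pos I3))))]"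

definition MUa :: el where "MUa = (Mk (Pos I4) (Pos I3) (Pos I1) (Pos I2))"

definition MUb :: el where "MUb = (Mk (Pos I1) (Neg I4) (Pos I2) (Neg I3))"

definition RHa :: el where "RHa = (Mk (Pos I2) (Pos I4) (Pos I1) (Pos I3))"

definition RHb :: el where "RHb = (Mk (Neg I4) (Neg I1) (Pos I3) (Pos I2))"


lemma L_eq: "[mkel p s. p \<leftarrow> P24, s \<leftarrow> S8] = map fst TAB"
  by (simp add: P24_def S8_def TAB_def sgn_def)

lemma tab_ok: "lall (\<lambda>(z,w). ev w a0 b0 = z) TAB"
  by (simp add: TAB_def a0_def b0_def e0_def)

lemma idem_ok: "lall (\<lambda>z. mul z z = z \<longrightarrow> z = e0) (map fst TAB)"
  by (simp add: TAB_def e0_def)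

lemma X0mem: "lall (\<lambda>p. if X0c (fst p) then p \<in> set X0W else True) TAB"
  by (simp add: TAB_def X0W_def X0W0_def X0W1_def X0W2_def X0W3_def e0_def)

lemma Y0mem: "lall (\<lambda>p. if Y0c (fst p) then p \<in> set Y0W else True) TAB"
  by (simp add: TAB_def Y0W_def e0_def)

definition Concl :: "el \<Rightarrow> el \<Rightarrow> bool" where
  "Concl x y \<longleftrightarrow> (x,y) \<in> set (map fst GOOD) \<or> (x,y) \<in> set (map fst INN)"

definition Big :: "(el \<times> bool list) list \<Rightarrow> bool" where
  "Big xs \<longleftrightarrow> lall (\<lambda>(x,w1). lall (\<lambda>(y,w2).
     if X0c (mul x y) then (if X0c (mul x (mul y y)) then
       (if ev w1 (ev w1 x y) (ev w2 x y) = a0 then (if ev w2 (ev w1 x y) (ev w2 x y) = b0 then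
          Concl x y else True) else True) else True) else True) Y0W) xs"

lemma big0: "Big X0W0"
  unfolding Big_def by (simp add: X0W0_def Y0W_def e0_def a0_def b0_def Concl_def GOOD_def INN_def)
lemma big1: "Big X0W1"
  unfolding Big_def by (simp add: X0W1_def Y0W_def e0_def a0_def b0_def Concl_def GOOD_def INN_def)
lemma big2: "Big X0W2"
  unfolding Big_def by (simp add: X0W2_def Y0W_def e0_def a0_def b0_def Concl_def GOOD_def INN_def)
lemma big3: "Big X0W3"
  unfolding Big_def by (simp add: X0W3_def Y0W_def e0_def a0_def b0_def Concl_def GOOD_def INN_def)

lemma big: "Big X0W"
  using big0 big1 big2 big3 unfolding Big_def X0W_def lall_append by blast

lemma good_ok: "lall (\<lambda>((x,y),(h,hi,m,wA,wB)). mul h hi = e0 \<and> mul hi h = e0 \<and>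
   distinct [pi h I1, pi h I2, pi h I3, pi h I4] \<and>
   ev wA a0 b0 = cj h hi a0 \<and> ev wB a0 b0 = cj h hi b0 \<and>
   ev wA x y = cj h hi (if m then MUa else RHa) \<and> ev wB x y = cj h hi (if m then MUb else RHb)) GOOD"
  by (simp add: GOOD_def e0_def a0_def b0_def cj_def pi_def MUa_def MUb_def RHa_def RHb_def)

lemma inn_ok: "lall (\<lambda>((x,y),(g,gi)). validc g \<and> mul g gi = e0 \<and> mul gi g = e0 \<and>
   x = cj g gi a0 \<and> y = cj g gi b0) INN"
  by (simp add: INN_def e0_def a0_def b0_def cj_def validc_def pi_def)

lemma a0_facts: "valid a0" "valid b0" "X0c a0" "Y0c b0" "X0c (mul a0 b0)" "X0c (mul a0 (mul b0 b0))"
  by (simp_all add: valid_validc validc_def pi_def a0_def b0_def e0_def)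

lemma mu_inv: "matrix_inv mu = muT" by (rule matrix_inv_eq[OF mu_muT muT_mu])
lemma rho_inv: "matrix_inv rho = rhoT" by (rule matrix_inv_eq[OF rho_rhoT rhoT_rho])

lemma mu_a0: "conj_by mu (enc a0) = enc MUa"
  unfolding conj_by_def mu_inv
  by (simp add: vec_eq_iff forall_4 matrix_matrix_mult_def sum_4 mu_def muT_def enc_nth a0_def MUa_def)
lemma mu_b0: "conj_by mu (enc b0) = enc MUb"
  unfolding conj_by_def mu_inv
  by (simp add: vec_eq_iff forall_4 matrix_matrix_mult_def sum_4 mu_def muT_def enc_nth b0_def MUb_def)
lemma rho_a0: "conj_by rho (enc a0) = enc RHa"
  unfolding conj_by_def rho_inv
  by (simp add: vec_eq_iff forall_4 matrix_matrix_mult_def sum_4 rho_def rhoT_def enc_nth a0_def RHa_def)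
lemma rho_b0: "conj_by rho (enc b0) = enc RHb"
  unfolding conj_by_def rho_inv
  by (simp add: vec_eq_iff forall_4 matrix_matrix_mult_def sum_4 rho_def rhoT_def enc_nth b0_def RHb_def)


lemma P24_mem: "distinct [a,b,c,d] \<Longrightarrow> [a,b,c,d] \<in> set P24"
  by (cases a; cases b; cases c; cases d) (simp_all add: P24_def)

lemma S8_mem: "sg s1 * sg s2 * sg s3 * sg s4 = 1 \<Longrightarrow> [isneg s1, isneg s2, isneg s3, isneg s4] \<in> set S8"
  by (cases s1; cases s2; cases s3; cases s4) (simp_all add: S8_def)

lemma sgn_idx: "sgn (isneg s) (idx s) = s" by (cases s) (simp_all add: sgn_def)

lemma valid_in_TAB: assumes "valid x" shows "\<exists>w. (x,w) \<in> set TAB"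
proof -
  obtain s1 s2 s3 s4 where x: "x = Mk s1 s2 s3 s4" by (cases x)
  have v: "validc x" using assms by (simp add: valid_validc)
  have p: "[idx s1, idx s2, idx s3, idx s4] \<in> set P24"
    by (rule P24_mem) (use v in \<open>simp add: x validc_def pi_def\<close>)
  have q: "[isneg s1, isneg s2, isneg s3, isneg s4] \<in> set S8"
    by (rule S8_mem) (use v in \<open>simp add: x validc_def\<close>)
  have "x = mkel [idx s1, idx s2, idx s3, idx s4] [isneg s1, isneg s2, isneg s3, isneg s4]"
    by (simp add: x sgn_idx)
  moreover have "mkel p s \<in> set [mkel p s. p \<leftarrow> P, s \<leftarrow> S]" if "p \<in> set P" "s \<in> set S" for p s P S
    using that by auto
  ultimately have "x \<in> set [mkel p s. p \<leftarrow> P24, s \<leftarrow> S8]" using p q by metis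
  then have "x \<in> set (map fst TAB)" by (simp only: L_eq)
  then show ?thesis by force
qed

lemma tab_word: assumes "valid z" shows "\<exists>w. (z,w) \<in> set TAB \<and> ev w a0 b0 = z"
  using valid_in_TAB[OF assms] tab_ok unfolding lall_iff by fastforce

lemma Fc_e0: assumes f: "f \<in> aut_WD4" shows "Fc f e0 = e0"
proof -
  have v: "valid (Fc f e0)" by (rule Fc_valid(1)[OF f valid_e0])
  have "mul (Fc f e0) (Fc f e0) = Fc f e0" using Fc_mul[OF f valid_e0 valid_e0] by simp
  moreover obtain w where "(Fc f e0, w) \<in> set TAB" using valid_in_TAB[OF v] by blast
  ultimately show ?thesis using idem_ok unfolding lall_iff by force
qed

lemma Fc_ev: assumes f: "f \<in> aut_WD4" and "valid x" "valid y"
  shows "Fc f (ev w x y) = ev w (Fc f x) (Fc f y)"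
proof (induction w)
  case Nil then show ?case by (simp add: Fc_e0[OF f])
next
  case (Cons t w)
  have "valid (if t then y else x)" using assms by simp
  then show ?case using Cons Fc_mul[OF f _ ev_valid[OF assms(2,3)]] by (cases t) auto
qed

lemma X0c_pres: assumes f: "f \<in> aut_WD4" and u: "valid u" "X0c u" shows "X0c (Fc f u)"
proof -
  have vu: "valid (mul u u)" using u valid_mul by blast
  have m: "mul (Fc f u) (Fc f u) = Fc f (mul u u)" using Fc_mul[OF f u(1) u(1)] by simp
  have "mul (mul (Fc f u) (Fc f u)) (mul (Fc f u) (Fc f u)) = Fc f (mul (mul u u) (mul u u))"
    using Fc_mul[OF f vu vu] m by simp
  also have "\<dots> = e0" using u(2) Fc_e0[OF f] by (simp add: X0c_iff)
  finally have 1: "mul (mul (Fc f u) (Fc f u)) (mul (Fc f u) (Fc f u)) = e0" .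
  have 2: "mul (Fc f u) (Fc f u) \<noteq> e0"
  proof
    assume "mul (Fc f u) (Fc f u) = e0"
    then have "Fc f (mul u u) = Fc f e0" using m Fc_e0[OF f] by simp
    then have "mul u u = e0" using Fc_inj[OF f vu valid_e0] by blast
    then show False using u(2) by (simp add: X0c_iff)
  qed
  show ?thesis using 1 2 by (simp add: X0c_iff)
qed

lemma Y0c_pres: assumes f: "f \<in> aut_WD4" and u: "valid u" "Y0c u" shows "Y0c (Fc f u)"
proof -
  have vu: "valid (mul u u)" using u valid_mul by blast
  have "mul (Fc f u) (mul (Fc f u) (Fc f u)) = Fc f (mul u (mul u u))"
    using Fc_mul[OF f u(1) u(1)] Fc_mul[OF f u(1) vu] by simp
  also have "\<dots> = e0" using u(2) Fc_e0[OF f] by (simp add: Y0c_iff)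
  finally have 1: "mul (Fc f u) (mul (Fc f u) (Fc f u)) = e0" .
  have 2: "Fc f u \<noteq> e0"
  proof
    assume "Fc f u = e0"
    then have "u = e0" using Fc_inj[OF f u(1) valid_e0] Fc_e0[OF f] by simp
    then show False using u(2) by (simp add: Y0c_iff)
  qed
  show ?thesis using 1 2 by (simp add: Y0c_iff)
qed

lemma bij_pi_distinct: "distinct [pi h I1, pi h I2, pi h I3, pi h I4] \<Longrightarrow> bij (pi h)"
proof -
  assume d: "distinct [pi h I1, pi h I2, pi h I3, pi h I4]"
  have s: "set [I1, I2, I3, I4] = UNIV" by (simp add: UNIV_ix)
  have "inj_on (pi h) (set [I1, I2, I3, I4])" using d distinct_map[of "pi h" "[I1, I2, I3, I4]"] by simp
  then have "inj (pi h)" unfolding s .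
  then show ?thesis using finite_UNIV_inj_surj[of "pi h"] by (auto simp: bij_def)
qed

lemma conj_M_ev: fixes M Mi :: mat4
  assumes M: "M ** Mi = mat 1" "Mi ** M = mat 1" "conj_by M (enc a0) = enc A" "conj_by M (enc b0) = enc B"
  shows "conj_by M (enc (ev w a0 b0)) = enc (ev w A B)"
proof (induction w)
  have MI: "matrix_inv M = Mi" by (rule matrix_inv_eq[OF M(1,2)])
  case Nil then show ?case using M(1) by (simp add: conj_by_def enc_e0 MI)
next
  have MI: "matrix_inv M = Mi" by (rule matrix_inv_eq[OF M(1,2)])
  case (Cons t w)
  have "conj_by M (enc (ev (t # w) a0 b0)) = conj_by M (enc (if t then b0 else a0)) ** conj_by M (enc (ev w a0 b0))"
    by (simp add: enc_mul[symmetric] conj_by_mult MI M(2))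
  also have "\<dots> = enc (ev (t # w) A B)" using Cons M(3,4) by (cases t) (simp_all add: enc_mul)
  finally show ?case .
qed

lemma good_case:
  assumes f: "f \<in> aut_WD4" and x: "Fc f a0 = x" and y: "Fc f b0 = y"
    and hh: "mul h hi = e0" "mul hi h = e0" "bij (pi h)"
    and wa: "ev wA a0 b0 = cj h hi a0" "ev wA x y = cj h hi A"
    and wb: "ev wB a0 b0 = cj h hi b0" "ev wB x y = cj h hi B"
    and M: "M ** Mi = mat 1" "Mi ** M = mat 1" "conj_by M (enc a0) = enc A" "conj_by M (enc b0) = enc B"
  shows "aut_conjugate f (conj_by M)"
proof -
  have va: "valid a0" "valid b0" using a0_facts by auto
  have psi: "conj_by (enc h) \<in> aut_WD4" by (rule conj_aut[OF hh])
  have vA: "valid (cj h hi a0)" "valid (cj h hi b0)" using cj_valid[OF _ hh] va by auto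
  have FA: "Fc f (cj h hi a0) = cj h hi A"
    using Fc_ev[OF f va, of wA] wa x y by simp
  have FB: "Fc f (cj h hi b0) = cj h hi B"
    using Fc_ev[OF f va, of wB] wb x y by simp
  have "f (conj_by (enc h) z) = conj_by (enc h) (conj_by M z)" if z: "z \<in> WD4" for z
  proof -
    obtain c where c: "valid c" "z = enc c" using WD4_sub z by blast
    obtain w where w: "ev w a0 b0 = c" using tab_word[OF c(1)] by blast
    have vc: "valid (cj h hi c)" using cj_valid[OF c(1) hh] .
    have "f (conj_by (enc h) z) = enc (Fc f (cj h hi c))"
      using c conj_enc(1)[OF hh(1,2)] Fc_valid(2)[OF f vc] by simp
    also have "cj h hi c = ev w (cj h hi a0) (cj h hi b0)" using cj_ev[OF hh(1,2)] w by metis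
    also have "Fc f (ev w (cj h hi a0) (cj h hi b0)) = ev w (cj h hi A) (cj h hi B)"
      using Fc_ev[OF f vA] FA FB by simp
    also have "\<dots> = cj h hi (ev w A B)" using cj_ev[OF hh(1,2)] by metis
    also have "enc (cj h hi (ev w A B)) = conj_by (enc h) (enc (ev w A B))"
      using conj_enc(1)[OF hh(1,2)] by simp
    also have "enc (ev w A B) = conj_by M z" using conj_M_ev[OF M, of w] unfolding w c(2) by simp
    finally show ?thesis .
  qed
  then show ?thesis unfolding aut_conjugate_def using psi by blast
qed

lemma inner_case:
  assumes f: "f \<in> aut_WD4" and x: "Fc f a0 = x" and y: "Fc f b0 = y"
    and g: "validc g" "mul g gi = e0" "mul gi g = e0" "x = cj g gi a0" "y = cj g gi b0"
  shows "inner_WD4 f"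
proof -
  have va: "valid a0" "valid b0" using a0_facts by auto
  have vg: "valid g" using g(1) by (simp add: valid_validc)
  have "f z = conj_by (enc g) z" if z: "z \<in> WD4" for z
  proof -
    obtain c where c: "valid c" "z = enc c" using WD4_sub z by blast
    obtain w where w: "ev w a0 b0 = c" using tab_word[OF c(1)] by blast
    have "f z = enc (Fc f c)" using Fc_valid(2)[OF f c(1)] c by simp
    also have "Fc f c = ev w x y" using Fc_ev[OF f va, of w] w x y by simp
    also have "\<dots> = cj g gi c" using cj_ev[OF g(2,3)] w g(4,5) by metis
    also have "enc (cj g gi c) = conj_by (enc g) z" using conj_enc(1)[OF g(2,3)] c by simp
    finally show ?thesis .
  qed
  then show ?thesis unfolding inner_WD4_def using WD4_sup[OF vg] by blast
qed

theorem proposition5p3: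
  assumes "trialitarian f"
  shows "aut_conjugate f (conj_by mu) \<or> aut_conjugate f (conj_by rho)"
proof -
  have f: "f \<in> aut_WD4" and f3: "\<forall>x\<in>WD4. f (f (f x)) = x" and ni: "\<not> inner_WD4 f"
    using assms unfolding trialitarian_def by auto
  have va: "valid a0" "valid b0" using a0_facts by auto
  define x where "x = Fc f a0"
  define y where "y = Fc f b0"
  have vx: "valid x" "valid y" unfolding x_def y_def using Fc_valid(1)[OF f] va by auto
  obtain w1 where w1: "(x,w1) \<in> set TAB" "ev w1 a0 b0 = x" using tab_word[OF vx(1)] by blast
  obtain w2 where w2: "(y,w2) \<in> set TAB" "ev w2 a0 b0 = y" using tab_word[OF vx(2)] by blast
  have X0x: "X0c x" unfolding x_def using X0c_pres[OF f va(1)] a0_facts by auto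
  have Y0y: "Y0c y" unfolding y_def using Y0c_pres[OF f va(2)] a0_facts by auto
  have xW: "(x,w1) \<in> set X0W" using X0mem w1(1) X0x unfolding lall_iff by fastforce
  have yW: "(y,w2) \<in> set Y0W" using Y0mem w2(1) Y0y unfolding lall_iff by fastforce
  have vab: "valid (mul b0 b0)" using va valid_mul by blast
  have c1: "X0c (mul x y)"
    using X0c_pres[OF f valid_mul[OF va]] a0_facts Fc_mul[OF f va] unfolding x_def y_def by auto
  have c2: "X0c (mul x (mul y y))"
    using X0c_pres[OF f valid_mul[OF va(1) vab]] a0_facts Fc_mul[OF f va(1) vab] Fc_mul[OF f va(2) va(2)]
    unfolding x_def y_def by auto
  have Fx: "Fc f x = ev w1 x y" using Fc_ev[OF f va, of w1] w1(2) unfolding x_def y_def by simp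
  have Fy: "Fc f y = ev w2 x y" using Fc_ev[OF f va, of w2] w2(2) unfolding x_def y_def by simp
  have FFx: "Fc f (Fc f x) = ev w1 (ev w1 x y) (ev w2 x y)"
    using Fc_ev[OF f vx, of w1] Fx Fy by simp
  have FFy: "Fc f (Fc f y) = ev w2 (ev w1 x y) (ev w2 x y)"
    using Fc_ev[OF f vx, of w2] Fx Fy by simp
  have cube: "Fc f (Fc f (Fc f u)) = u" if u: "valid u" for u
  proof (rule enc_inj)
    have v1: "valid (Fc f u)" using Fc_valid(1)[OF f u] .
    have v2: "valid (Fc f (Fc f u))" using Fc_valid(1)[OF f v1] .
    have "enc (Fc f (Fc f (Fc f u))) = f (f (f (enc u)))"
      using Fc_valid(2)[OF f v2] Fc_valid(2)[OF f v1] Fc_valid(2)[OF f u] by simp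
    also have "\<dots> = enc u" using f3 WD4_sup[OF u] by blast
    finally show "enc (Fc f (Fc f (Fc f u))) = enc u" .
  qed
  have t1: "ev w1 (ev w1 x y) (ev w2 x y) = a0" using cube[OF va(1)] FFx unfolding x_def by simp
  have t2: "ev w2 (ev w1 x y) (ev w2 x y) = b0" using cube[OF va(2)] FFy unfolding y_def by simp
  have "Big X0W" by (rule big)
  then have "Concl x y" using xW yW c1 c2 t1 t2 unfolding Big_def lall_iff by fastforce
  then consider "(x,y) \<in> set (map fst GOOD)" | "(x,y) \<in> set (map fst INN)" unfolding Concl_def by blast
  then show ?thesis
  proof cases
    case 1
    then obtain h hi m wA wB where t: "((x,y),(h,hi,m,wA,wB)) \<in> set GOOD" by force
    then have ck: "mul h hi = e0 \<and> mul hi h = e0 \<and>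
      distinct [pi h I1, pi h I2, pi h I3, pi h I4] \<and>
      ev wA a0 b0 = cj h hi a0 \<and> ev wB a0 b0 = cj h hi b0 \<and>
      ev wA x y = cj h hi (if m then MUa else RHa) \<and> ev wB x y = cj h hi (if m then MUb else RHb)"
      using good_ok unfolding lall_iff by fastforce
    have bh: "bij (pi h)" using ck bij_pi_distinct by blast
    show ?thesis
    proof (cases m)
      case True
      have "aut_conjugate f (conj_by mu)"
        by (rule good_case[OF f x_def[symmetric] y_def[symmetric], of h hi wA "MUa" wB "MUb" mu muT])
           (use ck True bh mu_muT muT_mu mu_a0 mu_b0 in auto)
      then show ?thesis by blast
    next
      case False
      have "aut_conjugate f (conj_by rho)"
        by (rule good_case[OF f x_def[symmetric] y_def[symmetric], of h hi wA "RHa" wB "RHb" rho rhoT])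
           (use ck False bh rho_rhoT rhoT_rho rho_a0 rho_b0 in auto)
      then show ?thesis by blast
    qed
  next
    case 2
    then obtain g gi where t: "((x,y),(g,gi)) \<in> set INN" by force
    then have ck: "validc g \<and> mul g gi = e0 \<and> mul gi g = e0 \<and> x = cj g gi a0 \<and> y = cj g gi b0"
      using inn_ok unfolding lall_iff by fastforce
    have "inner_WD4 f"
      by (rule inner_case[OF f x_def[symmetric] y_def[symmetric], of g gi]) (use ck in auto)
    with ni show ?thesis by blast
  qed
qed

end
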